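(* Let $r\geq 1$ and $k\geq 2$ be integers, let $G$ be a graph, and let $\mathcal{G}_0$ be the auxiliary graph of $G$ defined below. Let $\mathcal{G}$ be a bipartite subgraph of $\mathcal{G}_0$ on $m$ vertices with parts $X_1,X_2$ such that $d_{\mathcal{G}_0}(x)\leq D_1$ for every $x\in X_1$ and $d_{\mathcal{G}_0}(x)\leq D_2$ for every $x\in X_2$, where $D_1\leq D_2$. Then the number of homomorphic $2k$-cycles $(x_1,\dots,x_{2k})$ in $\mathcal{G}$ such that $x_i\cap x_j\neq\emptyset$ for some $i\neq j$ is at most (i) $32k^{3/2}r^{\frac{r+1}{2}}(D_1^{1-1/r}D_2)^{1/2}m^{\frac{1}{2k}}\hom(C_{2k},\mathcal{G})^{1-\frac{1}{2k}}$, and also at most (ii) $32k^{3/2}r^{\frac{r+1}{2}}(D_1^{1-1/r}D_2)^{1/2}(mD_2)^{\frac{1}{2k-2}}\hom(C_{2k},\mathcal{G})^{1-\frac{1}{2k-2}}$.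
   Context: Given a graph $G$ and a positive integer $r$, the auxiliary graph $\mathcal{G}_0$ has as vertex set the family of all $r$-element subsets of $V(G)$, and two such sets $U,W$ are adjacent in $\mathcal{G}_0$ if $U\cap W=\emptyset$ and $uw\in E(G)$ for all $u\in U$, $w\in W$. A homomorphic $2k$-cycle in a graph $H$ is a tuple $(x_1,\dots,x_{2k})$ of vertices with $x_ix_{i+1}\in E(H)$ for all $i$ (indices mod $2k$); $\hom(C_{2k},H)$ is the number of them. $d_H(x)$ is the degree of $x$ in $H$. *)

theory Defs
  imports "HOL-Library.FuncSet" Complex_Main
begin

definition simple_graph :: "'a set \<Rightarrow> ('a \<Rightarrow> 'a \<Rightarrow> bool) \<Rightarrow> bool" where
  "simple_graph V E \<longleftrightarrow> finite V \<and> (\<forall>u v. E u v \<longrightarrow> u \<in> V \<and> v \<in> V)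
     \<and> (\<forall>u v. E u v \<longrightarrow> E v u) \<and> (\<forall>v. \<not> E v v)"

definition aux_verts :: "'a set \<Rightarrow> nat \<Rightarrow> 'a set set" where
  "aux_verts V r = {U. U \<subseteq> V \<and> card U = r}"

definition aux_adj :: "('a \<Rightarrow> 'a \<Rightarrow> bool) \<Rightarrow> 'a set \<Rightarrow> 'a set \<Rightarrow> bool" where
  "aux_adj E U W \<longleftrightarrow> U \<inter> W = {} \<and> (\<forall>u\<in>U. \<forall>w\<in>W. E u w)"

definition degree :: "'b set \<Rightarrow> ('b \<Rightarrow> 'b \<Rightarrow> bool) \<Rightarrow> 'b \<Rightarrow> nat" where
  "degree V E x = card {y \<in> V. E x y}"

definition hom_cycles :: "nat \<Rightarrow> 'b set \<Rightarrow> ('b \<Rightarrow> 'b \<Rightarrow> bool) \<Rightarrow> (nat \<Rightarrow> 'b) set" where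
  "hom_cycles L V E = {f \<in> {..<L} \<rightarrow>\<^sub>E V. \<forall>i<L. E (f i) (f (Suc i mod L))}"

definition hom_C :: "nat \<Rightarrow> 'b set \<Rightarrow> ('b \<Rightarrow> 'b \<Rightarrow> bool) \<Rightarrow> nat" where
  "hom_C L V E = card (hom_cycles L V E)"

definition subgraph :: "'b set \<Rightarrow> ('b \<Rightarrow> 'b \<Rightarrow> bool) \<Rightarrow> 'b set \<Rightarrow> ('b \<Rightarrow> 'b \<Rightarrow> bool) \<Rightarrow> bool" where
  "subgraph VH EH V E \<longleftrightarrow> VH \<subseteq> V \<and> (\<forall>x y. EH x y \<longrightarrow> x \<in> VH \<and> y \<in> VH \<and> E x y)
     \<and> (\<forall>x y. EH x y \<longrightarrow> EH y x)"

definition bipartite_parts :: "'b set \<Rightarrow> ('b \<Rightarrow> 'b \<Rightarrow> bool) \<Rightarrow> 'b set \<Rightarrow> 'b set \<Rightarrow> bool" where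
  "bipartite_parts VH EH X1 X2 \<longleftrightarrow> VH = X1 \<union> X2 \<and> X1 \<inter> X2 = {}
     \<and> (\<forall>x y. EH x y \<longrightarrow> (x \<in> X1 \<and> y \<in> X2) \<or> (x \<in> X2 \<and> y \<in> X1))"

end

theory Submission
  imports Defs
begin



type_synonym 'b mat = "'b \<Rightarrow> 'b \<Rightarrow> real"

definition mm :: "'b set \<Rightarrow> 'b mat \<Rightarrow> 'b mat \<Rightarrow> 'b mat" where
  "mm S X Y = (\<lambda>x y. if x \<in> S \<and> y \<in> S then (\<Sum>z\<in>S. X x z * Y z y) else 0)"
definition idm :: "'b set \<Rightarrow> 'b mat" where
  "idm S = (\<lambda>x y. if x \<in> S \<and> x = y then 1 else 0)"
definition supp :: "'b set \<Rightarrow> 'b mat \<Rightarrow> bool" where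
  "supp S X \<longleftrightarrow> (\<forall>x y. X x y \<noteq> 0 \<longrightarrow> x \<in> S \<and> y \<in> S)"
primrec mpow :: "'b set \<Rightarrow> 'b mat \<Rightarrow> nat \<Rightarrow> 'b mat" where
  "mpow S X 0 = idm S"
| "mpow S X (Suc n) = mm S X (mpow S X n)"
definition tr :: "'b set \<Rightarrow> 'b mat \<Rightarrow> real" where
  "tr S X = (\<Sum>x\<in>S. X x x)"
definition tp :: "'b mat \<Rightarrow> 'b mat" where
  "tp X = (\<lambda>x y. X y x)"
definition fro :: "'b set \<Rightarrow> 'b mat \<Rightarrow> 'b mat \<Rightarrow> real" where
  "fro S X Y = (\<Sum>x\<in>S. \<Sum>y\<in>S. X x y * Y x y)"

lemma supp_mm[simp]: "supp S (mm S X Y)"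
  by (auto simp: supp_def mm_def)
lemma supp_idm[simp]: "supp S (idm S)"
  by (auto simp: supp_def idm_def)
lemma supp_mpow[simp]: "supp S (mpow S X n)"
  by (cases n) auto
lemma supp_tp[simp]: "supp S X \<Longrightarrow> supp S (tp X)"
  by (auto simp: supp_def tp_def)
lemma suppD: "supp S X \<Longrightarrow> x \<notin> S \<or> y \<notin> S \<Longrightarrow> X x y = 0"
  by (auto simp: supp_def)

lemma mm_assoc: "finite S \<Longrightarrow> mm S (mm S X Y) Z = mm S X (mm S Y Z)"
  unfolding mm_def
  by (auto intro!: ext simp: sum_distrib_left sum_distrib_right mult.assoc intro: sum.swap)

lemma mm_idm_left: "finite S \<Longrightarrow> supp S X \<Longrightarrow> mm S (idm S) X = X"
proof (intro ext)
  fix x y assume "finite S" "supp S X"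
  have "(\<Sum>z\<in>S. (if x \<in> S \<and> x = z then 1 else 0) * X z y) = (if x \<in> S then X x y else 0)"
    using \<open>finite S\<close> by (simp add: if_distrib[of "\<lambda>a. a * _"] sum.delta cong: if_cong)
  thus "mm S (idm S) X x y = X x y" using \<open>supp S X\<close>
    unfolding mm_def idm_def by (auto simp: suppD)
qed

lemma mm_idm_right: "finite S \<Longrightarrow> supp S X \<Longrightarrow> mm S X (idm S) = X"
proof (intro ext)
  fix x y assume "finite S" "supp S X"
  have "(\<Sum>z\<in>S. X x z * (if z \<in> S \<and> z = y then 1 else 0)) = (if y \<in> S then X x y else 0)"
    using \<open>finite S\<close> by (simp add: if_distrib[of "\<lambda>a. _ * a"] sum.delta' cong: if_cong)
  thus "mm S X (idm S) x y = X x y" using \<open>supp S X\<close>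
    unfolding mm_def idm_def by (auto simp: suppD)
qed

lemma mpow_add: "finite S \<Longrightarrow> supp S X \<Longrightarrow> mpow S X (a + b) = mm S (mpow S X a) (mpow S X b)"
  by (induction a) (auto simp: mm_idm_left mm_assoc)

lemma mpow_1: "finite S \<Longrightarrow> supp S X \<Longrightarrow> mpow S X (Suc 0) = X"
  by (simp add: mm_idm_right)

lemma mpow_Suc_right: "finite S \<Longrightarrow> supp S X \<Longrightarrow> mpow S X (Suc n) = mm S (mpow S X n) X"
  using mpow_add[of S X n 1] by (simp add: mm_idm_right)

lemma tr_comm: "finite S \<Longrightarrow> tr S (mm S X Y) = tr S (mm S Y X)"
proof -
  have "(\<Sum>x\<in>S. \<Sum>z\<in>S. X x z * Y z x) = (\<Sum>z\<in>S. \<Sum>x\<in>S. X x z * Y z x)"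
    by (rule sum.swap)
  thus ?thesis unfolding tr_def mm_def by (simp add: mult.commute)
qed

lemma tp_mm: "tp (mm S X Y) = mm S (tp Y) (tp X)"
  unfolding tp_def mm_def by (auto intro!: ext simp: mult.commute)

lemma tp_idm[simp]: "tp (idm S) = idm S"
  unfolding tp_def idm_def by (auto intro!: ext)

lemma tp_mpow: "finite S \<Longrightarrow> supp S X \<Longrightarrow> tp X = X \<Longrightarrow> tp (mpow S X n) = mpow S X n"
proof (induction n)
  case (Suc n) thus ?case by (simp add: tp_mm mpow_Suc_right[symmetric])
qed simp




lemma cs_sum:
  fixes a b :: "'c \<Rightarrow> real"
  shows "(\<Sum>i\<in>I. a i * b i)\<^sup>2 \<le> (\<Sum>i\<in>I. (a i)\<^sup>2) * (\<Sum>i\<in>I. (b i)\<^sup>2)"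
proof -
  have "0 \<le> (\<Sum>i\<in>I. \<Sum>j\<in>I. (a i * b j - a j * b i)\<^sup>2)" by (intro sum_nonneg) auto
  also have "(\<Sum>i\<in>I. \<Sum>j\<in>I. (a i * b j - a j * b i)\<^sup>2)
     = (\<Sum>i\<in>I. \<Sum>j\<in>I. (a i)\<^sup>2 * (b j)\<^sup>2 + (a j)\<^sup>2 * (b i)\<^sup>2 - 2 * ((a i * b i) * (a j * b j)))"
    by (intro sum.cong refl) (simp add: power2_eq_square algebra_simps)
  also have "\<dots> = 2 * ((\<Sum>i\<in>I. (a i)\<^sup>2) * (\<Sum>i\<in>I. (b i)\<^sup>2)) - 2 * (\<Sum>i\<in>I. a i * b i)\<^sup>2"
  proof -
    have e1: "(\<Sum>i\<in>I. \<Sum>j\<in>I. (a i)\<^sup>2 * (b j)\<^sup>2) = (\<Sum>i\<in>I. (a i)\<^sup>2) * (\<Sum>i\<in>I. (b i)\<^sup>2)"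
      by (simp add: sum_product)
    have e2: "(\<Sum>i\<in>I. \<Sum>j\<in>I. (a j)\<^sup>2 * (b i)\<^sup>2) = (\<Sum>i\<in>I. (a i)\<^sup>2) * (\<Sum>i\<in>I. (b i)\<^sup>2)"
      using e1 sum.swap[of "\<lambda>i j. (a j)\<^sup>2 * (b i)\<^sup>2" I I] by (simp add: mult.commute)
    have e3: "(\<Sum>i\<in>I. \<Sum>j\<in>I. 2 * ((a i * b i) * (a j * b j))) = 2 * (\<Sum>i\<in>I. a i * b i)\<^sup>2"
    proof -
      have "(\<Sum>i\<in>I. a i * b i)\<^sup>2 = (\<Sum>i\<in>I. \<Sum>j\<in>I. (a i * b i) * (a j * b j))"
        unfolding power2_eq_square by (rule sum_product)
      thus ?thesis by (simp add: sum_distrib_left)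
    qed
    show ?thesis using e1 e2 e3 by (simp add: sum_subtractf sum.distrib)
  qed
  finally show ?thesis by simp
qed

lemma cs_sqrt:
  fixes a b :: "'c \<Rightarrow> real"
  shows "(\<Sum>i\<in>I. a i * b i) \<le> sqrt (\<Sum>i\<in>I. (a i)\<^sup>2) * sqrt (\<Sum>i\<in>I. (b i)\<^sup>2)"
proof -
  have "(\<Sum>i\<in>I. a i * b i) \<le> \<bar>\<Sum>i\<in>I. a i * b i\<bar>" by simp
  also have "\<dots> = sqrt ((\<Sum>i\<in>I. a i * b i)\<^sup>2)" by simp
  also have "\<dots> \<le> sqrt ((\<Sum>i\<in>I. (a i)\<^sup>2) * (\<Sum>i\<in>I. (b i)\<^sup>2))"
    by (rule real_sqrt_le_mono[OF cs_sum])
  also have "\<dots> = sqrt (\<Sum>i\<in>I. (a i)\<^sup>2) * sqrt (\<Sum>i\<in>I. (b i)\<^sup>2)"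
    by (simp add: real_sqrt_mult)
  finally show ?thesis .
qed

lemma fro_tr: "fro S X Y = tr S (mm S (tp X) Y)"
proof -
  have "(\<Sum>x\<in>S. \<Sum>y\<in>S. X x y * Y x y) = (\<Sum>y\<in>S. \<Sum>x\<in>S. X x y * Y x y)"
    by (rule sum.swap)
  thus ?thesis unfolding fro_def tr_def mm_def tp_def by simp
qed

lemma fro_self_nonneg: "0 \<le> fro S X X"
  unfolding fro_def by (intro sum_nonneg) auto

primrec chain :: "'b set \<Rightarrow> (nat \<Rightarrow> 'b mat) \<Rightarrow> nat \<Rightarrow> 'b mat" where
  "chain S c 0 = c 0"
| "chain S c (Suc n) = mm S (chain S c n) (c (Suc n))"

definition UU :: "'b \<Rightarrow> 'b \<Rightarrow> nat \<Rightarrow> (nat \<Rightarrow> 'b) \<Rightarrow> nat \<Rightarrow> 'b" where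
  "UU x y n g t = (if t = 0 then x else if t = Suc n then y else g t)"

lemma chain_walk:
  assumes "finite S" "x \<in> S" "y \<in> S"
  shows "chain S c n x y = (\<Sum>g\<in>PiE {1..n} (\<lambda>_. S). \<Prod>t\<in>{..n}. c t (UU x y n g t) (UU x y n g (Suc t)))"
  using assms(3)
proof (induction n arbitrary: y)
  case 0
  then show ?case by (simp add: UU_def)
next
  case (Suc n)
  have "chain S c (Suc n) x y = (\<Sum>z\<in>S. chain S c n x z * c (Suc n) z y)"
    using Suc.prems assms by (simp add: mm_def)
  also have "\<dots> = (\<Sum>z\<in>S. \<Sum>g\<in>PiE {1..n} (\<lambda>_. S).
      (\<Prod>t\<in>{..n}. c t (UU x z n g t) (UU x z n g (Suc t))) * c (Suc n) z y)"
    using Suc.IH by (simp add: sum_distrib_right)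
  also have "\<dots> = (\<Sum>(z,g)\<in>S \<times> PiE {1..n} (\<lambda>_. S).
      (\<Prod>t\<in>{..n}. c t (UU x z n g t) (UU x z n g (Suc t))) * c (Suc n) z y)"
    by (simp add: sum.cartesian_product)
  also have "\<dots> = (\<Sum>g\<in>PiE {1..Suc n} (\<lambda>_. S).
      \<Prod>t\<in>{..Suc n}. c t (UU x y (Suc n) g t) (UU x y (Suc n) g (Suc t)))"
  proof (rule sum.reindex_bij_witness[of _ "\<lambda>g. (g (Suc n), g(Suc n := undefined))" "\<lambda>(z,g). g(Suc n := z)"])
    fix zg assume "zg \<in> S \<times> PiE {1..n} (\<lambda>_. S)"
    then obtain z g where zg: "zg = (z,g)" "z \<in> S" "g \<in> PiE {1..n} (\<lambda>_. S)" by blast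
    have gS: "g (Suc n) = undefined" using zg(3) by (auto simp: PiE_def extensional_def)
    show "(\<lambda>g. (g (Suc n), g(Suc n := undefined))) ((\<lambda>(z, g). g(Suc n := z)) zg) = zg"
      using zg gS by auto
    show "(\<lambda>(z, g). g(Suc n := z)) zg \<in> PiE {1..Suc n} (\<lambda>_. S)"
      using zg by (auto simp: PiE_def extensional_def Pi_def)
    have eq1: "\<And>t. t \<le> Suc n \<Longrightarrow> UU x y (Suc n) (g(Suc n := z)) t = UU x z n g t"
      by (auto simp: UU_def)
    have "(\<Prod>t\<in>{..Suc n}. c t (UU x y (Suc n) (g(Suc n := z)) t) (UU x y (Suc n) (g(Suc n := z)) (Suc t)))
        = (\<Prod>t\<in>{..n}. c t (UU x y (Suc n) (g(Suc n := z)) t) (UU x y (Suc n) (g(Suc n := z)) (Suc t)))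
          * c (Suc n) z y"
      by (simp add: atMost_Suc UU_def mult.commute)
    also have "\<dots> = (\<Prod>t\<in>{..n}. c t (UU x z n g t) (UU x z n g (Suc t))) * c (Suc n) z y"
      by (intro arg_cong2[where f="(*)"] prod.cong refl) (simp_all add: eq1)
    finally show "(\<Prod>t\<in>{..Suc n}. c t (UU x y (Suc n) ((\<lambda>(z, g). g(Suc n := z)) zg) t)
            (UU x y (Suc n) ((\<lambda>(z, g). g(Suc n := z)) zg) (Suc t))) =
         (case zg of (z, g) \<Rightarrow> (\<Prod>t\<in>{..n}. c t (UU x z n g t) (UU x z n g (Suc t))) * c (Suc n) z y)"
      using zg by simp
  next
    fix g assume g: "g \<in> PiE {1..Suc n} (\<lambda>_. S)"
    show "(\<lambda>(z, g). g(Suc n := z)) ((\<lambda>g. (g (Suc n), g(Suc n := undefined))) g) = g"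
      by auto
    show "(\<lambda>g. (g (Suc n), g(Suc n := undefined))) g \<in> S \<times> PiE {1..n} (\<lambda>_. S)"
      using g by (auto simp: PiE_def extensional_def Pi_def)
  qed
  finally show ?case .
qed

lemma cycle_trace:
  assumes "finite S" "L \<ge> 1"
  shows "(\<Sum>f\<in>PiE {..<L} (\<lambda>_. S). \<Prod>t<L. c t (f t) (f (Suc t mod L))) = tr S (chain S c (L - 1))"
proof -
  define n where "n = L - 1"
  have L: "L = Suc n" using assms n_def by simp
  have "tr S (chain S c (L - 1)) = (\<Sum>x\<in>S. \<Sum>g\<in>PiE {1..n} (\<lambda>_. S). \<Prod>t\<in>{..n}. c t (UU x x n g t) (UU x x n g (Suc t)))"
    unfolding tr_def n_def[symmetric] using assms by (intro sum.cong refl chain_walk) auto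
  also have "\<dots> = (\<Sum>(x,g)\<in>S \<times> PiE {1..n} (\<lambda>_. S). \<Prod>t\<in>{..n}. c t (UU x x n g t) (UU x x n g (Suc t)))"
    by (simp add: sum.cartesian_product)
  also have "\<dots> = (\<Sum>f\<in>PiE {..<L} (\<lambda>_. S). \<Prod>t<L. c t (f t) (f (Suc t mod L)))"
  proof (rule sum.reindex_bij_witness[of _ "\<lambda>f. (f 0, f(0 := undefined))" "\<lambda>(x,g). g(0 := x)"])
    fix xg assume "xg \<in> S \<times> PiE {1..n} (\<lambda>_. S)"
    then obtain x g where xg: "xg = (x,g)" "x \<in> S" "g \<in> PiE {1..n} (\<lambda>_. S)" by blast
    have g0: "g 0 = undefined" using xg(3) by (auto simp: PiE_def extensional_def)
    show "(\<lambda>f. (f 0, f(0 := undefined))) ((\<lambda>(x, g). g(0 := x)) xg) = xg"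
      using xg g0 by auto
    show "(\<lambda>(x, g). g(0 := x)) xg \<in> PiE {..<L} (\<lambda>_. S)"
      using xg L by (auto simp: PiE_def extensional_def Pi_def)
    have "(\<Prod>t<L. c t ((g(0 := x)) t) ((g(0 := x)) (Suc t mod L))) = 
          (\<Prod>t\<in>{..n}. c t (UU x x n g t) (UU x x n g (Suc t)))"
      unfolding L lessThan_Suc_atMost
    proof (intro prod.cong refl)
      fix t assume t: "t \<in> {..n}"
      show "c t ((g(0 := x)) t) ((g(0 := x)) (Suc t mod Suc n)) = c t (UU x x n g t) (UU x x n g (Suc t))"
        using t by (cases "t = n") (auto simp: UU_def)
    qed
    thus "(\<Prod>t<L. c t (((\<lambda>(x, g). g(0 := x)) xg) t) (((\<lambda>(x, g). g(0 := x)) xg) (Suc t mod L))) =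
          (case xg of (x, g) \<Rightarrow> \<Prod>t\<in>{..n}. c t (UU x x n g t) (UU x x n g (Suc t)))"
      using xg by simp
  next
    fix f assume f: "f \<in> PiE {..<L} (\<lambda>_. S)"
    show "(\<lambda>(x, g). g(0 := x)) ((\<lambda>f. (f 0, f(0 := undefined))) f) = f" by auto
    show "(\<lambda>f. (f 0, f(0 := undefined))) f \<in> S \<times> PiE {1..n} (\<lambda>_. S)"
      using f L by (auto simp: PiE_def extensional_def Pi_def)
  qed
  finally show ?thesis by simp
qed




definition dgm :: "'b set \<Rightarrow> ('b \<Rightarrow> bool) \<Rightarrow> 'b mat" where
  "dgm S p = (\<lambda>x y. if x \<in> S \<and> x = y \<and> p x then 1 else 0)"

primrec mprod :: "'b set \<Rightarrow> 'b mat list \<Rightarrow> 'b mat" where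
  "mprod S [] = idm S"
| "mprod S (X # Xs) = mm S X (mprod S Xs)"

lemma supp_dgm[simp]: "supp S (dgm S p)"
  by (auto simp: supp_def dgm_def)
lemma tp_dgm[simp]: "tp (dgm S p) = dgm S p"
  by (auto simp: tp_def dgm_def intro!: ext)
lemma supp_mprod[simp]: "supp S (mprod S xs)"
  by (cases xs) auto

lemma dgm_mm: "finite S \<Longrightarrow> mm S (dgm S p) Z = (\<lambda>x y. if x \<in> S \<and> y \<in> S \<and> p x then Z x y else 0)"
proof (intro ext)
  fix x y assume "finite S"
  have "(\<Sum>z\<in>S. dgm S p x z * Z z y) = (if x \<in> S \<and> p x then Z x y else 0)"
  proof (cases "x \<in> S \<and> p x")
    case True thus ?thesis
      using \<open>finite S\<close> by (simp add: dgm_def if_distrib[of "\<lambda>a. a * _"] sum.delta cong: if_cong)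
  next
    case False thus ?thesis by (auto simp: dgm_def intro!: sum.neutral)
  qed
  thus "mm S (dgm S p) Z x y = (if x \<in> S \<and> y \<in> S \<and> p x then Z x y else 0)"
    by (simp add: mm_def)
qed

lemma dgm_idem: "finite S \<Longrightarrow> mm S (dgm S p) (mm S (dgm S p) Z) = mm S (dgm S p) Z"
  by (auto simp: dgm_mm intro!: ext)

lemma mprod_append: "finite S \<Longrightarrow> mprod S (xs @ ys) = mm S (mprod S xs) (mprod S ys)"
  by (induction xs) (auto simp: mm_idm_left mm_assoc)

lemma mprod_rep: "mprod S (replicate n X) = mpow S X n"
  by (induction n) auto

lemma chain_mprod:
  assumes "finite S" "\<And>t. supp S (c t)"
  shows "chain S c n = mprod S (map c [0..<Suc n])"
proof (induction n)
  case 0 thus ?case using assms by (simp add: mm_idm_right)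
next
  case (Suc n)
  have "mprod S (map c [0..<Suc (Suc n)]) = mprod S (map c [0..<Suc n] @ [c (Suc n)])" by simp
  also have "\<dots> = mm S (mprod S (map c [0..<Suc n])) (c (Suc n))"
    using assms by (simp del: upt_Suc add: mprod_append mm_idm_right)
  finally show ?case using Suc by (simp del: upt_Suc)
qed

lemma map_split:
  assumes "i < j" "j < L"
  shows "map (\<lambda>t. if t = i \<or> t = j then Q else X) [0..<L]
       = replicate i X @ Q # replicate (j - Suc i) X @ Q # replicate (L - Suc j) X"
proof -
  have u: "[0..<L] = [0..<i] @ i # [Suc i..<j] @ j # [Suc j..<L]"
  proof -
    have "[0..<L] = [0..<i] @ [i..<L]" using assms upt_add_eq_append[of 0 i "L - i"] by simp
    also have "[i..<L] = i # [Suc i..<L]" using assms by (simp add: upt_conv_Cons)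
    also have "[Suc i..<L] = [Suc i..<j] @ [j..<L]" using assms upt_add_eq_append[of "Suc i" j "L - j"] by simp
    also have "[j..<L] = j # [Suc j..<L]" using assms by (simp add: upt_conv_Cons)
    finally show ?thesis by simp
  qed
  have m1: "map (\<lambda>t. if t = i \<or> t = j then Q else X) [a..<b] = replicate (b - a) X"
    if "\<forall>t. a \<le> t \<and> t < b \<longrightarrow> t \<noteq> i \<and> t \<noteq> j" for a b
  proof -
    have "map (\<lambda>t. if t = i \<or> t = j then Q else X) [a..<b] = map (\<lambda>t. X) [a..<b]"
      using that by (intro map_cong) auto
    thus ?thesis by (simp add: map_replicate_const)
  qed
  show ?thesis
    unfolding u using assms by (simp add: m1)
qed

locale mset =
  fixes S :: "'b set" and A :: "'b mat"
  assumes finS: "finite S" and suppA: "supp S A" and symA: "tp A = A"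
begin

lemmas asc = mm_assoc[OF finS]

lemma pw_add: "mpow S A (a + b) = mm S (mpow S A a) (mpow S A b)"
  using mpow_add[OF finS suppA] .

lemma pw_fold: "mm S (mpow S A a) (mm S (mpow S A b) Z) = mm S (mpow S A (a + b)) Z"
  by (simp add: pw_add asc)

lemma pw_SucR: "mpow S A (Suc n) = mm S (mpow S A n) A"
  using mpow_Suc_right[OF finS suppA] .

lemma trc: "tr S (mm S X Y) = tr S (mm S Y X)"
  using tr_comm[OF finS] .

lemma tp_pw: "tp (mpow S A n) = mpow S A n"
  using tp_mpow[OF finS suppA symA] .

definition Kv :: "('b \<Rightarrow> bool) \<Rightarrow> 'b mat" where
  "Kv p = mm S A (mm S (dgm S p) A)"

lemma tp_Kv: "tp (Kv p) = Kv p"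
  unfolding Kv_def by (simp add: tp_mm symA asc)

lemma cycle_weights_trace:
  assumes "i < j" "j < L" "2 \<le> j - i" "j - i + 2 \<le> L"
  shows "tr S (chain S (\<lambda>t. if t = i \<or> t = j then mm S (dgm S p) A else A) (L - 1))
       = tr S (mm S (Kv p) (mm S (mpow S A (j - i - 2)) (mm S (Kv p) (mpow S A (L - (j - i) - 2)))))"
proof -
  define P where "P = dgm S p"
  define a where "a = j - i - 2"
  define b where "b = L - (j - i) - 2"
  have L1: "Suc (L - 1) = L" using assms by simp
  have sc: "\<And>t. supp S (if t = i \<or> t = j then mm S (dgm S p) A else A)" using suppA by auto
  have "tr S (chain S (\<lambda>t. if t = i \<or> t = j then mm S (dgm S p) A else A) (L - 1))
      = tr S (mprod S (replicate i A @ mm S P A # replicate (j - Suc i) A @ mm S P A # replicate (L - Suc j) A))"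
  proof -
    have "map (\<lambda>t. if t = i \<or> t = j then mm S (dgm S p) A else A) [0..<L] =
      replicate i A @ mm S P A # replicate (j - Suc i) A @ mm S P A # replicate (L - Suc j) A"
      unfolding P_def by (rule map_split[OF assms(1,2)])
    thus ?thesis unfolding chain_mprod[OF finS sc] L1 by (simp only:)
  qed
  also have "\<dots> = tr S (mm S (mpow S A i) (mm S P (mm S A (mm S (mpow S A (a+1)) (mm S P (mm S A (mpow S A (L - Suc j))))))))"
  proof -
    have e: "j - Suc i = a + 1" using assms a_def by simp
    show ?thesis unfolding e by (simp add: mprod_append[OF finS] mprod_rep asc)
  qed
  also have "\<dots> = tr S (mm S (mm S P (mm S A (mm S (mpow S A (a+1)) (mm S P (mm S A (mpow S A (L - Suc j))))))) (mpow S A i))"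
    by (rule trc)
  also have "\<dots> = tr S (mm S P (mm S A (mm S (mpow S A (a+1)) (mm S P (mm S A (mpow S A (L - Suc j + i)))))))"
    by (simp add: asc pw_add)
  also have "L - Suc j + i = Suc b" using assms b_def by simp
  also have "tr S (mm S P (mm S A (mm S (mpow S A (a+1)) (mm S P (mm S A (mpow S A (Suc b)))))))
     = tr S (mm S (mm S P (mm S A (mm S (mpow S A a) (mm S A (mm S P (mm S A (mpow S A b))))))) A)"
    by (simp add: pw_SucR asc del: mpow.simps)
  also have "\<dots> = tr S (mm S A (mm S P (mm S A (mm S (mpow S A a) (mm S A (mm S P (mm S A (mpow S A b))))))))"
    by (rule trc)
  also have "\<dots> = tr S (mm S (Kv p) (mm S (mpow S A a) (mm S (Kv p) (mpow S A b))))"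
    by (simp add: Kv_def asc P_def)
  finally show ?thesis by (simp add: a_def b_def)
qed

end




lemma fro_prod: "fro S X Y = (\<Sum>xy\<in>S \<times> S. X (fst xy) (snd xy) * Y (fst xy) (snd xy))"
  unfolding fro_def by (simp add: sum.cartesian_product case_prod_beta)

lemma fro_cs: "fro S X Y \<le> sqrt (fro S X X) * sqrt (fro S Y Y)"
  unfolding fro_prod using cs_sqrt[of "\<lambda>xy. X (fst xy) (snd xy)" "\<lambda>xy. Y (fst xy) (snd xy)" "S \<times> S"]
  by (simp add: power2_eq_square)

lemma seq_max:
  fixes g :: "nat \<Rightarrow> real"
  assumes nn: "\<And>p. 0 \<le> g p"
    and lc: "\<And>p. 0 < p \<Longrightarrow> p < N \<Longrightarrow> g p \<le> sqrt (g (p - 1)) * sqrt (g (p + 1))"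
    and pN: "p \<le> N"
  shows "g p \<le> max (g 0) (g N)"
proof -
  define M where "M = Max (g ` {0..N})"
  have fin: "finite (g ` {0..N})" by simp
  have gle: "\<And>q. q \<le> N \<Longrightarrow> g q \<le> M" unfolding M_def by (intro Max_ge) auto
  have "M \<in> g ` {0..N}" unfolding M_def by (intro Max_in) auto
  then obtain q where q: "q \<le> N" "g q = M" by auto
  define p0 where "p0 = (LEAST q. q \<le> N \<and> g q = M)"
  have p0: "p0 \<le> N" "g p0 = M" unfolding p0_def using LeastI[of "\<lambda>q. q \<le> N \<and> g q = M" q] q by auto
  have "p0 = 0 \<or> p0 = N"
  proof (rule ccontr)
    assume "\<not> (p0 = 0 \<or> p0 = N)"
    hence pp: "0 < p0" "p0 < N" using p0 by auto
    have "g (p0 - 1) \<noteq> M"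
    proof
      assume a: "g (p0 - 1) = M"
      have "(LEAST q. q \<le> N \<and> g q = M) \<le> p0 - 1"
        by (rule Least_le) (use pp a in auto)
      thus False using pp unfolding p0_def[symmetric] by simp
    qed
    moreover have "p0 - 1 \<le> N" using pp by simp
    ultimately have lt: "g (p0 - 1) < M" using gle[of "p0 - 1"] by fastforce
    have le: "g (p0 + 1) \<le> M" using gle pp by auto
    have Mpos: "0 < M" using lt nn[of "p0 - 1"] by simp
    have s1: "sqrt (g (p0 - 1)) < sqrt M" using lt by simp
    have s2: "sqrt (g (p0 + 1)) \<le> sqrt M" using le by simp
    have "sqrt (g (p0 - 1)) * sqrt (g (p0 + 1)) < sqrt M * sqrt M"
    proof (cases "g (p0 + 1) = 0")
      case True thus ?thesis using Mpos by simp
    next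
      case False
      hence "0 < sqrt (g (p0 + 1))" using nn[of "p0+1"] by simp
      hence "sqrt (g (p0 - 1)) * sqrt (g (p0 + 1)) < sqrt M * sqrt (g (p0 + 1))"
        using s1 by simp
      also have "\<dots> \<le> sqrt M * sqrt M" using s2 Mpos by (intro mult_left_mono) auto
      finally show ?thesis .
    qed
    also have "\<dots> = M" using Mpos by simp
    finally have "g p0 < M" using lc[OF pp] by simp
    thus False using p0 by simp
  qed
  hence "M \<le> max (g 0) (g N)" using p0 by auto
  thus ?thesis using gle[OF pN] by simp
qed

lemma logconv_bound:
  fixes F :: "nat \<Rightarrow> nat \<Rightarrow> real"
  assumes cs: "\<And>s1 s2 t1 t2. F (s1 + s2) (t1 + t2) \<le> sqrt (F (2*s1) (2*t1)) * sqrt (F (2*s2) (2*t2))"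
    and nn: "\<And>a b. 0 \<le> F (2*a) (2*b)"
    and sym: "F 0 (2*N) = F (2*N) 0"
    and s: "s \<le> 2*N"
  shows "F s (2*N - s) \<le> F 0 (2*N)"
proof -
  define g where "g p = F (2*p) (2*(N-p))" for p
  have gnn: "\<And>p. 0 \<le> g p" unfolding g_def by (rule nn)
  have glc: "g p \<le> sqrt (g (p - 1)) * sqrt (g (p + 1))" if "0 < p" "p < N" for p
  proof -
    have c: "F ((p - 1) + (p + 1)) ((N - p + 1) + (N - p - 1))
       \<le> sqrt (F (2*(p - 1)) (2*(N - p + 1))) * sqrt (F (2*(p + 1)) (2*(N - p - 1)))" by (rule cs)
    have a1: "(p - 1) + (p + 1) = 2*p" and a2: "(N - p + 1) + (N - p - 1) = 2*(N-p)"
      and a3: "N - p + 1 = N - (p - 1)" and a4: "N - p - 1 = N - (p + 1)"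
      and a5: "(N - (p - 1)) + (N - (p + 1)) = 2*(N-p)" using that by auto
    from c show ?thesis unfolding g_def by (simp only: a1 a2 a3 a4 a5)
  qed
  have gb: "g p \<le> F 0 (2*N)" if "p \<le> N" for p
    using seq_max[of g N p, OF gnn glc that] sym unfolding g_def by simp
  show ?thesis
  proof (cases "even s")
    case True
    then obtain p where p: "s = 2*p" by auto
    hence "F s (2*N - s) = g p" unfolding g_def by (simp add: diff_mult_distrib2)
    thus ?thesis using gb[of p] p s by simp
  next
    case False
    then obtain p where p: "s = 2*p + 1" using oddE by blast
    have pN: "p + 1 \<le> N" using p s by simp
    have "F (p + (p+1)) ((N - p) + (N - p - 1)) \<le> sqrt (F (2*p) (2*(N-p))) * sqrt (F (2*(p+1)) (2*(N - p - 1)))"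
      by (rule cs)
    moreover have a1: "p + (p+1) = s" and a2: "(N - p) + (N - p - 1) = 2*N - s" using p pN by auto
    moreover have a3: "N - p - 1 = N - (p+1)" by simp
    ultimately have "F s (2*N - s) \<le> sqrt (g p) * sqrt (g (p+1))" unfolding g_def by (simp only: a1 a2 a3)
    also have "\<dots> \<le> sqrt (F 0 (2*N)) * sqrt (F 0 (2*N))"
      using gb[of p] gb[of "p+1"] pN gnn nn[of 0 N] by (intro mult_mono) auto
    also have "\<dots> = F 0 (2*N)" using gnn[of 0] gb[of 0] by simp
    finally show ?thesis .
  qed
qed

context mset
begin

lemma supp_Kv[simp]: "supp S (Kv p)" unfolding Kv_def by simp

lemma fro_K: "fro S (mm S (mpow S A s1) (mm S (Kv p) (mpow S A t1))) (mm S (mpow S A s2) (mm S (Kv p) (mpow S A t2)))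
   = tr S (mm S (Kv p) (mm S (mpow S A (s1 + s2)) (mm S (Kv p) (mpow S A (t1 + t2)))))"
proof -
  have "fro S (mm S (mpow S A s1) (mm S (Kv p) (mpow S A t1))) (mm S (mpow S A s2) (mm S (Kv p) (mpow S A t2)))
     = tr S (mm S (mpow S A t1) (mm S (Kv p) (mm S (mpow S A s1) (mm S (mpow S A s2) (mm S (Kv p) (mpow S A t2))))))"
    unfolding fro_tr by (simp add: tp_mm tp_pw tp_Kv asc)
  also have "\<dots> = tr S (mm S (mm S (Kv p) (mm S (mpow S A s1) (mm S (mpow S A s2) (mm S (Kv p) (mpow S A t2))))) (mpow S A t1))"
    by (rule trc)
  also have "\<dots> = tr S (mm S (Kv p) (mm S (mpow S A (s1 + s2)) (mm S (Kv p) (mpow S A (t2 + t1)))))"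
    by (simp add: asc pw_fold pw_add[symmetric])
  finally show ?thesis by (simp add: add.commute)
qed

definition Gf :: "('v \<Rightarrow> 'b \<Rightarrow> bool) \<Rightarrow> 'v set \<Rightarrow> nat \<Rightarrow> nat \<Rightarrow> real" where
  "Gf ps V s t = (\<Sum>v\<in>V. tr S (mm S (Kv (ps v)) (mm S (mpow S A s) (mm S (Kv (ps v)) (mpow S A t)))))"

lemma Gf_fro: "Gf ps V (s1 + s2) (t1 + t2) = (\<Sum>v\<in>V. fro S (mm S (mpow S A s1) (mm S (Kv (ps v)) (mpow S A t1)))
       (mm S (mpow S A s2) (mm S (Kv (ps v)) (mpow S A t2))))"
  unfolding Gf_def fro_K ..

lemma Gf_cs: "Gf ps V (s1 + s2) (t1 + t2) \<le> sqrt (Gf ps V (2*s1) (2*t1)) * sqrt (Gf ps V (2*s2) (2*t2))"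
proof -
  define X where "X v = mm S (mpow S A s1) (mm S (Kv (ps v)) (mpow S A t1))" for v
  define Y where "Y v = mm S (mpow S A s2) (mm S (Kv (ps v)) (mpow S A t2))" for v
  have e: "\<And>Z W. (\<Sum>v\<in>V. fro S (Z v) (W v)) = (\<Sum>u\<in>V \<times> (S \<times> S). Z (fst u) (fst (snd u)) (snd (snd u)) * W (fst u) (fst (snd u)) (snd (snd u)))"
    by (simp add: fro_prod sum.cartesian_product case_prod_beta)
  have "Gf ps V (s1 + s2) (t1 + t2) = (\<Sum>v\<in>V. fro S (X v) (Y v))" unfolding Gf_fro X_def Y_def ..
  also have "\<dots> \<le> sqrt (\<Sum>v\<in>V. fro S (X v) (X v)) * sqrt (\<Sum>v\<in>V. fro S (Y v) (Y v))"
    unfolding e using cs_sqrt by (simp add: power2_eq_square)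
  also have "(\<Sum>v\<in>V. fro S (X v) (X v)) = Gf ps V (2*s1) (2*t1)"
    unfolding X_def mult_2 Gf_fro ..
  also have "(\<Sum>v\<in>V. fro S (Y v) (Y v)) = Gf ps V (2*s2) (2*t2)"
    unfolding Y_def mult_2 Gf_fro ..
  finally show ?thesis .
qed

lemma Gf_nn: "0 \<le> Gf ps V (2*a) (2*b)"
  unfolding mult_2 Gf_fro by (intro sum_nonneg fro_self_nonneg)

lemma Gf_sym: "Gf ps V 0 n = Gf ps V n 0"
  unfolding Gf_def
proof (intro sum.cong refl)
  fix v
  have "tr S (mm S (Kv (ps v)) (mm S (mpow S A n) (mm S (Kv (ps v)) (mpow S A 0))))
      = tr S (mm S (Kv (ps v)) (mm S (mpow S A n) (Kv (ps v))))"
    using finS by (simp add: mm_idm_right)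
  also have "\<dots> = tr S (mm S (mm S (Kv (ps v)) (mpow S A n)) (Kv (ps v)))"
    by (simp add: asc)
  also have "\<dots> = tr S (mm S (Kv (ps v)) (mm S (Kv (ps v)) (mpow S A n)))"
    by (rule trc)
  finally show "tr S (mm S (Kv (ps v)) (mm S (mpow S A 0) (mm S (Kv (ps v)) (mpow S A n))))
      = tr S (mm S (Kv (ps v)) (mm S (mpow S A n) (mm S (Kv (ps v)) (mpow S A 0))))"
    using finS by (simp add: mm_idm_left)
qed

lemma Gf_bound: "s \<le> 2*N \<Longrightarrow> Gf ps V s (2*N - s) \<le> Gf ps V 0 (2*N)"
  by (rule logconv_bound[of "Gf ps V"]) (auto intro: Gf_cs Gf_nn Gf_sym)

end




lemma seq_ratio:
  fixes a :: "nat \<Rightarrow> real"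
  assumes nn: "\<And>j. 0 \<le> a j"
    and lc: "\<And>j. 1 \<le> j \<Longrightarrow> (a j)\<^sup>2 \<le> a (j - 1) * a (j + 1)"
    and pos: "\<And>j. j \<le> k \<Longrightarrow> 0 < a j"
    and ik: "i < k"
  shows "a (i + 1) * a (k - 1) \<le> a i * a k"
proof -
  have "\<forall>i. i + d = k - 1 \<longrightarrow> i < k \<longrightarrow> a (i + 1) * a (k - 1) \<le> a i * a k" for d
  proof (induction d)
    case 0 thus ?case by (auto simp: mult.commute)
  next
    case (Suc d)
    show ?case
    proof (intro allI impI)
      fix i assume i: "i + Suc d = k - 1" "i < k"
      show "a (i + 1) * a (k - 1) \<le> a i * a k"
      proof (cases "i + 1 < k")
        case False
        hence k: "k = i + 1" using i by simp
        show ?thesis unfolding k by (simp add: mult.commute)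
      next
        case True
        have IH: "a (i + 2) * a (k - 1) \<le> a (i + 1) * a k"
          using Suc.IH[rule_format, of "i+1"] i True by (simp add: add.assoc)
        have sq: "(a (i+1))\<^sup>2 \<le> a i * a (i + 2)" using lc[of "i+1"] by (simp add: add.assoc)
        have p1: "0 < a (i+1)" using pos True by simp
        have "a (i+1) * (a (i + 1) * a (k - 1)) = (a (i+1))\<^sup>2 * a (k - 1)" by (simp add: power2_eq_square)
        also have "\<dots> \<le> a i * a (i + 2) * a (k - 1)" using sq nn by (intro mult_right_mono) auto
        also have "\<dots> = a i * (a (i + 2) * a (k - 1))" by simp
        also have "\<dots> \<le> a i * (a (i + 1) * a k)" using IH nn by (intro mult_left_mono) auto
        also have "\<dots> = a (i+1) * (a i * a k)" by simp
        finally show ?thesis using p1 by simp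
      qed
    qed
  qed
  from this[of "k - 1 - i"] show ?thesis using ik by simp
qed

lemma seq_interp:
  fixes a :: "nat \<Rightarrow> real"
  assumes nn: "\<And>j. 0 \<le> a j"
    and lc: "\<And>j. 1 \<le> j \<Longrightarrow> (a j)\<^sup>2 \<le> a (j - 1) * a (j + 1)"
    and pos: "\<And>j. j \<le> k \<Longrightarrow> 0 < a j"
    and ik: "i < k"
  shows "a (k - 1) ^ (k - i) \<le> a i * a k ^ (k - 1 - i)"
proof -
  have "\<forall>i. i + d = k - 1 \<longrightarrow> i < k \<longrightarrow> a (k - 1) ^ (k - i) \<le> a i * a k ^ (k - 1 - i)" for d
  proof (induction d)
    case 0
    show ?case
    proof (intro allI impI)
      fix i assume "i + 0 = k - 1" "i < k"
      hence "k - i = 1" "k - 1 - i = 0" "i = k - 1" by auto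
      thus "a (k - 1) ^ (k - i) \<le> a i * a k ^ (k - 1 - i)" by simp
    qed
  next
    case (Suc d)
    show ?case
    proof (intro allI impI)
      fix i assume i: "i + Suc d = k - 1" "i < k"
      show "a (k - 1) ^ (k - i) \<le> a i * a k ^ (k - 1 - i)"
      proof (cases "i + 1 < k")
        case False
        hence "k - i = 1" "k - 1 - i = 0" "i = k - 1" using i by auto
        thus ?thesis by simp
      next
        case True
        have IH: "a (k - 1) ^ (k - (i+1)) \<le> a (i+1) * a k ^ (k - 1 - (i+1))"
          using Suc.IH[rule_format, of "i+1"] i True by simp
        have e1: "k - i = Suc (k - (i+1))" using True by simp
        have e2: "k - 1 - i = Suc (k - 1 - (i+1))" using True by simp
        have "a (k - 1) ^ (k - i) = a (k - 1) * a (k - 1) ^ (k - (i+1))" unfolding e1 by simp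
        also have "\<dots> \<le> a (k - 1) * (a (i+1) * a k ^ (k - 1 - (i+1)))"
          using IH nn by (intro mult_left_mono) auto
        also have "\<dots> = (a (i+1) * a (k - 1)) * a k ^ (k - 1 - (i+1))" by simp
        also have "\<dots> \<le> (a i * a k) * a k ^ (k - 1 - (i+1))"
          using seq_ratio[where a=a and k=k and i=i, OF nn lc pos] True nn by (intro mult_right_mono) auto
        also have "\<dots> = a i * a k ^ (k - 1 - i)" unfolding e2 by simp
        finally show ?thesis .
      qed
    qed
  qed
  from this[of "k - 1 - i"] show ?thesis using ik by simp
qed

lemma seq_pos:
  fixes a :: "nat \<Rightarrow> real"
  assumes nn: "\<And>j. 0 \<le> a j"
    and lc: "\<And>j. 1 \<le> j \<Longrightarrow> (a j)\<^sup>2 \<le> a (j - 1) * a (j + 1)"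
    and pos: "0 < a k" and jk: "j \<le> k"
  shows "0 < a j"
proof (rule ccontr)
  assume "\<not> 0 < a j"
  hence z: "a j = 0" using nn[of j] by simp
  have "a (j + d) = 0" if "1 \<le> j + d" for d
    using that
  proof (induction d)
    case 0
    show ?case using z by simp
  next
    case (Suc d)
    show ?case
    proof (cases "j + d = 0")
      case True
      hence "j = 0" "d = 0" by auto
      have "(a 1)\<^sup>2 \<le> a 0 * a 2" using lc[of 1] by (simp add: numeral_2_eq_2)
      thus ?thesis using z \<open>j = 0\<close> \<open>d = 0\<close> by simp
    next
      case False
      have "(a (j + Suc d))\<^sup>2 \<le> a (j + d) * a (j + d + 2)" using lc[of "j + Suc d"] by simp
      thus ?thesis using Suc.IH False by simp
    qed
  qed
  hence "a k = 0" if "1 \<le> k" using jk that by (metis le_add_diff_inverse)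
  moreover have "k = 0 \<Longrightarrow> a k = 0" using z jk by simp
  ultimately show False using pos by (cases "k = 0") auto
qed

context mset
begin

lemma K_quad:
  assumes op: "\<And>w. (\<Sum>x\<in>S. (\<Sum>z\<in>S. A x z * (if p z then w z else 0))\<^sup>2) \<le> \<Lambda> * (\<Sum>z\<in>S. (if p z then (w z)\<^sup>2 else 0))"
  shows "tr S (mm S (Kv p) (mm S (mpow S A 0) (mm S (Kv p) (mpow S A (2*q))))) \<le> \<Lambda> * tr S (mm S (Kv p) (mpow S A (2*q)))"
proof -
  define P where "P = dgm S p"
  define W where "W = mm S A (mpow S A q)"
  define Z where "Z = mm S P W"
  have Zent: "Z z y = (if z \<in> S \<and> y \<in> S \<and> p z then W z y else 0)" for z y
    unfolding Z_def P_def dgm_mm[OF finS] by simp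
  have pq: "mpow S A (2*q) = mm S (mpow S A q) (mpow S A q)" using pw_add[of q q] by (simp add: mult_2)
  have L: "tr S (mm S (Kv p) (mm S (mpow S A 0) (mm S (Kv p) (mpow S A (2*q))))) = fro S (mm S A Z) (mm S A Z)"
  proof -
    have "fro S (mm S A Z) (mm S A Z) = tr S (mm S (mpow S A q) (mm S A (mm S P (mm S A (mm S A (mm S P (mm S A (mpow S A q))))))))"
      unfolding fro_tr Z_def W_def P_def by (simp add: tp_mm symA tp_pw asc del: mpow.simps)
    also have "\<dots> = tr S (mm S (mm S A (mm S P (mm S A (mm S A (mm S P (mm S A (mpow S A q))))))) (mpow S A q))"
      by (rule trc)
    also have "\<dots> = tr S (mm S (Kv p) (mm S (mpow S A 0) (mm S (Kv p) (mpow S A (2*q)))))"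
      unfolding pq Kv_def P_def using finS suppA by (simp add: asc mm_idm_left mpow.simps(1) del: mpow.simps(2))
    finally show ?thesis by simp
  qed
  have R: "tr S (mm S (Kv p) (mpow S A (2*q))) = fro S Z Z"
  proof -
    have "fro S Z Z = tr S (mm S (mpow S A q) (mm S A (mm S P (mm S P (mm S A (mpow S A q))))))"
      unfolding fro_tr Z_def W_def P_def by (simp add: tp_mm symA tp_pw asc del: mpow.simps)
    also have "\<dots> = tr S (mm S (mpow S A q) (mm S A (mm S P (mm S A (mpow S A q)))))"
      unfolding P_def by (simp add: dgm_idem[OF finS])
    also have "\<dots> = tr S (mm S (mm S A (mm S P (mm S A (mpow S A q)))) (mpow S A q))"
      by (rule trc)
    also have "\<dots> = tr S (mm S (Kv p) (mpow S A (2*q)))"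
      unfolding pq Kv_def P_def by (simp add: asc del: mpow.simps)
    finally show ?thesis by simp
  qed
  have "fro S (mm S A Z) (mm S A Z) = (\<Sum>x\<in>S. \<Sum>y\<in>S. (\<Sum>z\<in>S. A x z * Z z y)\<^sup>2)"
    unfolding fro_def by (simp add: mm_def power2_eq_square)
  also have "\<dots> = (\<Sum>y\<in>S. \<Sum>x\<in>S. (\<Sum>z\<in>S. A x z * Z z y)\<^sup>2)" by (rule sum.swap)
  also have "\<dots> \<le> (\<Sum>y\<in>S. \<Lambda> * (\<Sum>z\<in>S. (Z z y)\<^sup>2))"
  proof (rule sum_mono)
    fix y assume y: "y \<in> S"
    have "(\<Sum>x\<in>S. (\<Sum>z\<in>S. A x z * Z z y)\<^sup>2) = (\<Sum>x\<in>S. (\<Sum>z\<in>S. A x z * (if p z then W z y else 0))\<^sup>2)"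
      using y by (intro sum.cong refl arg_cong[where f="\<lambda>t. t\<^sup>2"]) (auto simp: Zent)
    also have "\<dots> \<le> \<Lambda> * (\<Sum>z\<in>S. (if p z then (W z y)\<^sup>2 else 0))" by (rule op)
    also have "(\<Sum>z\<in>S. (if p z then (W z y)\<^sup>2 else 0)) = (\<Sum>z\<in>S. (Z z y)\<^sup>2)"
      using y by (intro sum.cong refl) (auto simp: Zent)
    finally show "(\<Sum>x\<in>S. (\<Sum>z\<in>S. A x z * Z z y)\<^sup>2) \<le> \<Lambda> * (\<Sum>z\<in>S. (Z z y)\<^sup>2)" .
  qed
  also have "\<dots> = \<Lambda> * (\<Sum>y\<in>S. \<Sum>z\<in>S. (Z z y)\<^sup>2)" by (simp add: sum_distrib_left)
  also have "(\<Sum>y\<in>S. \<Sum>z\<in>S. (Z z y)\<^sup>2) = fro S Z Z"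
    unfolding fro_def power2_eq_square by (rule sum.swap)
  finally show ?thesis using L R by simp
qed

lemma tr_K_pw: "tr S (mm S (Kv p) (mpow S A n)) = (\<Sum>x\<in>S. if p x then mpow S A (n + 2) x x else 0)"
proof -
  have e: "mm S (Kv p) (mpow S A n) = mm S A (mm S (dgm S p) (mm S A (mpow S A n)))"
    unfolding Kv_def by (simp add: asc)
  have "tr S (mm S (Kv p) (mpow S A n)) = tr S (mm S (mm S (dgm S p) (mm S A (mpow S A n))) A)"
    unfolding e by (rule trc)
  also have "\<dots> = tr S (mm S (dgm S p) (mpow S A (n + 2)))"
    by (simp add: asc pw_SucR[symmetric])
  also have "\<dots> = (\<Sum>x\<in>S. if p x then mpow S A (n + 2) x x else 0)"
    unfolding tr_def dgm_mm[OF finS] by (intro sum.cong refl) auto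
  finally show ?thesis .
qed

lemma sum_K_pw:
  assumes finV: "finite V" and cnt: "\<And>x. x \<in> S \<Longrightarrow> card {v\<in>V. ps v x} = r"
  shows "(\<Sum>v\<in>V. tr S (mm S (Kv (ps v)) (mpow S A n))) = real r * tr S (mpow S A (n + 2))"
proof -
  have "(\<Sum>v\<in>V. tr S (mm S (Kv (ps v)) (mpow S A n))) = (\<Sum>v\<in>V. \<Sum>x\<in>S. if ps v x then mpow S A (n + 2) x x else 0)"
    by (simp add: tr_K_pw)
  also have "\<dots> = (\<Sum>x\<in>S. \<Sum>v\<in>V. if ps v x then mpow S A (n + 2) x x else 0)" by (rule sum.swap)
  also have "\<dots> = (\<Sum>x\<in>S. real r * mpow S A (n + 2) x x)"
  proof (intro sum.cong refl)
    fix x assume x: "x \<in> S"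
    have "(\<Sum>v\<in>V. if ps v x then mpow S A (n + 2) x x else 0) = (\<Sum>v\<in>{v\<in>V. ps v x}. mpow S A (n + 2) x x)"
      using finV by (simp only: sum.inter_filter)
    also have "\<dots> = real (card {v\<in>V. ps v x}) * mpow S A (n + 2) x x" by (simp only: sum_constant mult.commute)
    also have "\<dots> = real r * mpow S A (n + 2) x x" using cnt[OF x] by simp
    finally show "(\<Sum>v\<in>V. if ps v x then mpow S A (n + 2) x x else 0) = real r * mpow S A (n + 2) x x" .
  qed
  also have "\<dots> = real r * tr S (mpow S A (n + 2))" unfolding tr_def by (simp add: sum_distrib_left)
  finally show ?thesis .
qed

lemma tr_pw_fro: "tr S (mpow S A (i + j)) = fro S (mpow S A i) (mpow S A j)"
  unfolding fro_tr by (simp add: tp_pw pw_add)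

lemma tr_pw_nn: "0 \<le> tr S (mpow S A (2*j))"
  unfolding mult_2 tr_pw_fro by (rule fro_self_nonneg)

lemma tr_pw_lc: "1 \<le> j \<Longrightarrow> (tr S (mpow S A (2*j)))\<^sup>2 \<le> tr S (mpow S A (2*(j - 1))) * tr S (mpow S A (2*(j+1)))"
proof -
  assume j: "1 \<le> j"
  have e2: "2*j = (j-1)+(j+1)" using j by simp
  have "tr S (mpow S A (2*j)) = fro S (mpow S A (j - 1)) (mpow S A (j + 1))"
    unfolding e2 by (rule tr_pw_fro)
  also have "\<dots> \<le> sqrt (fro S (mpow S A (j - 1)) (mpow S A (j - 1))) * sqrt (fro S (mpow S A (j + 1)) (mpow S A (j + 1)))"
    by (rule fro_cs)
  also have "\<dots> = sqrt (tr S (mpow S A (2*(j - 1)))) * sqrt (tr S (mpow S A (2*(j+1))))"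
  proof -
    have f1: "fro S (mpow S A (j-1)) (mpow S A (j-1)) = tr S (mpow S A (2*(j-1)))"
      using tr_pw_fro[of "j-1" "j-1"] by (simp only: mult_2)
    have f2: "fro S (mpow S A (j+1)) (mpow S A (j+1)) = tr S (mpow S A (2*(j+1)))"
      using tr_pw_fro[of "j+1" "j+1"] by (simp only: mult_2)
    show ?thesis by (simp only: f1 f2)
  qed
  finally have "tr S (mpow S A (2*j)) \<le> sqrt (tr S (mpow S A (2*(j - 1)))) * sqrt (tr S (mpow S A (2*(j+1))))" .
  hence "(tr S (mpow S A (2*j)))\<^sup>2 \<le> (sqrt (tr S (mpow S A (2*(j - 1)))) * sqrt (tr S (mpow S A (2*(j+1)))))\<^sup>2"
    using tr_pw_nn[of j] by (intro power_mono) auto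
  also have "\<dots> = tr S (mpow S A (2*(j - 1))) * tr S (mpow S A (2*(j+1)))"
    using tr_pw_nn[of "j-1"] tr_pw_nn[of "j+1"] by (simp add: power_mult_distrib)
  finally show ?thesis .
qed

lemma tr_idm: "tr S (mpow S A 0) = real (card S)"
  by (simp add: tr_def idm_def)

end




lemma prod_01:
  assumes "finite I"
  shows "(\<Prod>t\<in>I. if Q t then 1 else (0::real)) = (if \<forall>t\<in>I. Q t then 1 else 0)"
  using assms by (induction I rule: finite_induct) auto

definition adjm :: "('b \<Rightarrow> 'b \<Rightarrow> bool) \<Rightarrow> 'b mat" where
  "adjm R = (\<lambda>x y. if R x y then 1 else 0)"

lemma mset_adjm:
  assumes "finite S" "\<And>x y. R x y \<Longrightarrow> x \<in> S \<and> y \<in> S" "\<And>x y. R x y \<Longrightarrow> R y x"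
  shows "mset S (adjm R)"
  using assms unfolding mset_def supp_def tp_def adjm_def by (auto intro!: ext)

lemma hc_sum:
  assumes "finite S" "L \<ge> 1"
    and Rs: "\<And>x y. R x y \<Longrightarrow> x \<in> S \<and> y \<in> S"
    and Q: "\<And>t x y. t < L \<Longrightarrow> x \<in> S \<Longrightarrow> y \<in> S \<Longrightarrow> c t x y = (if R x y \<and> (t \<in> T \<longrightarrow> p x) then 1 else 0)"
    and T: "T \<subseteq> {..<L}"
  shows "real (card {f \<in> hom_cycles L S R. \<forall>t\<in>T. p (f t)}) = tr S (chain S c (L - 1))"
proof -
  have fin: "finite (PiE {..<L} (\<lambda>_. S))" using assms by (simp add: finite_PiE)
  have "tr S (chain S c (L - 1)) = (\<Sum>f\<in>PiE {..<L} (\<lambda>_. S). \<Prod>t<L. c t (f t) (f (Suc t mod L)))"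
    using cycle_trace[OF assms(1,2)] by simp
  also have "\<dots> = (\<Sum>f\<in>PiE {..<L} (\<lambda>_. S). if f \<in> hom_cycles L S R \<and> (\<forall>t\<in>T. p (f t)) then 1 else 0)"
  proof (intro sum.cong refl)
    fix f assume f: "f \<in> PiE {..<L} (\<lambda>_. S)"
    have fS: "\<And>t. t < L \<Longrightarrow> f t \<in> S" using f by auto
    have "(\<Prod>t<L. c t (f t) (f (Suc t mod L))) = (\<Prod>t<L. if R (f t) (f (Suc t mod L)) \<and> (t \<in> T \<longrightarrow> p (f t)) then 1 else 0)"
      using assms fS by (intro prod.cong refl Q) auto
    also have "\<dots> = (if \<forall>t<L. R (f t) (f (Suc t mod L)) \<and> (t \<in> T \<longrightarrow> p (f t)) then 1 else 0)"
      by (simp add: prod_01)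
    also have "(\<forall>t<L. R (f t) (f (Suc t mod L)) \<and> (t \<in> T \<longrightarrow> p (f t))) \<longleftrightarrow> f \<in> hom_cycles L S R \<and> (\<forall>t\<in>T. p (f t))"
      using f T unfolding hom_cycles_def by auto
    finally show "(\<Prod>t<L. c t (f t) (f (Suc t mod L))) = (if f \<in> hom_cycles L S R \<and> (\<forall>t\<in>T. p (f t)) then 1 else 0)" by simp
  qed
  also have "\<dots> = real (card {f \<in> PiE {..<L} (\<lambda>_. S). f \<in> hom_cycles L S R \<and> (\<forall>t\<in>T. p (f t))})"
    using fin by (simp only: sum.inter_filter[symmetric, OF fin]) simp
  also have "{f \<in> PiE {..<L} (\<lambda>_. S). f \<in> hom_cycles L S R \<and> (\<forall>t\<in>T. p (f t))} = {f \<in> hom_cycles L S R. \<forall>t\<in>T. p (f t)}"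
    unfolding hom_cycles_def by auto
  finally show ?thesis by simp
qed

lemma hom_C_trace:
  assumes "finite S" "L \<ge> 1" "\<And>x y. R x y \<Longrightarrow> x \<in> S \<and> y \<in> S" "\<And>x y. R x y \<Longrightarrow> R y x"
  shows "real (hom_C L S R) = tr S (mpow S (adjm R) L)"
proof -
  interpret mset S "adjm R" by (rule mset_adjm) (use assms in auto)
  have Q: "\<And>t x y. t < L \<Longrightarrow> x \<in> S \<Longrightarrow> y \<in> S \<Longrightarrow>
      (\<lambda>_. adjm R) t x y = (if R x y \<and> (t \<in> {} \<longrightarrow> True) then 1 else 0)"
    by (simp add: adjm_def)
  have "real (card {f \<in> hom_cycles L S R. \<forall>t\<in>{}. (\<lambda>_. True) (f t)}) = tr S (chain S (\<lambda>_. adjm R) (L - 1))"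
    by (rule hc_sum[OF assms(1,2,3) Q]) auto
  also have "chain S (\<lambda>_. adjm R) (L - 1) = mprod S (map (\<lambda>_. adjm R) [0..<Suc (L - 1)])"
    by (rule chain_mprod[OF finS]) (use suppA in auto)
  also have "\<dots> = mpow S (adjm R) L"
    using assms by (simp add: map_replicate_const mprod_rep)
  finally show ?thesis unfolding hom_C_def by simp
qed

lemma hc_pair_trace:
  assumes "finite S" "\<And>x y. R x y \<Longrightarrow> x \<in> S \<and> y \<in> S" "\<And>x y. R x y \<Longrightarrow> R y x"
    and ij: "i < j" "j < L" "2 \<le> j - i" "j - i + 2 \<le> L"
  shows "real (card {f \<in> hom_cycles L S R. p (f i) \<and> p (f j)})
     = tr S (mm S (mset.Kv S (adjm R) p) (mm S (mpow S (adjm R) (j - i - 2))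
           (mm S (mset.Kv S (adjm R) p) (mpow S (adjm R) (L - (j - i) - 2)))))"
proof -
  interpret mset S "adjm R" by (rule mset_adjm) (use assms in auto)
  have e: "{f \<in> hom_cycles L S R. p (f i) \<and> p (f j)} = {f \<in> hom_cycles L S R. \<forall>t\<in>{i,j}. p (f t)}" by auto
  have Q: "\<And>t x y. t < L \<Longrightarrow> x \<in> S \<Longrightarrow> y \<in> S \<Longrightarrow>
      (\<lambda>t. if t = i \<or> t = j then mm S (dgm S p) (adjm R) else adjm R) t x y =
          (if R x y \<and> (t \<in> {i, j} \<longrightarrow> p x) then 1 else 0)"
    by (auto simp: dgm_mm[OF finS] adjm_def)
  have "real (card {f \<in> hom_cycles L S R. \<forall>t\<in>{i,j}. p (f t)})
     = tr S (chain S (\<lambda>t. if t = i \<or> t = j then mm S (dgm S p) (adjm R) else adjm R) (L - 1))"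
    by (rule hc_sum[OF assms(1) _ assms(2) Q]) (use ij in auto)
  hence "real (card {f \<in> hom_cycles L S R. p (f i) \<and> p (f j)})
     = tr S (chain S (\<lambda>t. if t = i \<or> t = j then mm S (dgm S p) (adjm R) else adjm R) (L - 1))"
    unfolding e .
  also have "\<dots> = tr S (mm S (Kv p) (mm S (mpow S (adjm R) (j - i - 2)) (mm S (Kv p) (mpow S (adjm R) (L - (j - i) - 2)))))"
    by (rule cycle_weights_trace[OF ij])
  finally show ?thesis .
qed

context mset
begin

lemma op_bound:
  assumes A01: "\<And>x y. A x y = 0 \<or> A x y = 1"
    and hyp: "\<And>z. z \<in> S \<Longrightarrow> p z \<Longrightarrow> (\<Sum>x\<in>S. A x z * (\<Sum>z'\<in>S. if p z' then A x z' else 0)) \<le> \<Lambda>"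
  shows "(\<Sum>x\<in>S. (\<Sum>z\<in>S. A x z * (if p z then w z else 0))\<^sup>2) \<le> \<Lambda> * (\<Sum>z\<in>S. (if p z then (w z)\<^sup>2 else 0))"
proof -
  define cnt where "cnt x = (\<Sum>z'\<in>S. if p z' then A x z' else 0)" for x
  have Asq: "\<And>x z. A x z * A x z = A x z" using A01 by (metis mult_1 mult_zero_left)
  have Ann: "\<And>x z. 0 \<le> A x z" using A01 by (metis order_refl zero_le_one)
  have cnn: "\<And>x. 0 \<le> cnt x" unfolding cnt_def by (intro sum_nonneg) (simp add: Ann)
  have step: "(\<Sum>z\<in>S. A x z * (if p z then w z else 0))\<^sup>2 \<le> cnt x * (\<Sum>z\<in>S. if p z then A x z * (w z)\<^sup>2 else 0)" for x
  proof -
    have "(\<Sum>z\<in>S. A x z * (if p z then w z else 0)) = (\<Sum>z\<in>S. (if p z then A x z else 0) * (if p z then A x z * w z else 0))"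
      by (intro sum.cong refl) (auto simp: mult.assoc[symmetric] Asq)
    hence "(\<Sum>z\<in>S. A x z * (if p z then w z else 0))\<^sup>2 \<le> (\<Sum>z\<in>S. (if p z then A x z else 0)\<^sup>2) * (\<Sum>z\<in>S. (if p z then A x z * w z else 0)\<^sup>2)"
      using cs_sum by simp
    also have "(\<Sum>z\<in>S. (if p z then A x z else 0)\<^sup>2) = cnt x"
    proof -
      have "\<And>z. (if p z then A x z else 0)\<^sup>2 = (if p z then A x z else 0)"
        by (simp only: power2_eq_square) (simp add: Asq A01)
      thus ?thesis unfolding cnt_def by simp
    qed
    also have "(\<Sum>z\<in>S. (if p z then A x z * w z else 0)\<^sup>2) = (\<Sum>z\<in>S. if p z then A x z * (w z)\<^sup>2 else 0)"
    proof -
      have A2: "\<And>z. (A x z)\<^sup>2 = A x z" by (simp only: power2_eq_square) (simp add: Asq A01)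
      show ?thesis by (intro sum.cong refl) (simp add: power_mult_distrib A2)
    qed
    finally show ?thesis .
  qed
  have "(\<Sum>x\<in>S. (\<Sum>z\<in>S. A x z * (if p z then w z else 0))\<^sup>2) \<le> (\<Sum>x\<in>S. cnt x * (\<Sum>z\<in>S. if p z then A x z * (w z)\<^sup>2 else 0))"
    by (intro sum_mono step)
  also have "\<dots> = (\<Sum>x\<in>S. \<Sum>z\<in>S. if p z then (w z)\<^sup>2 * (A x z * cnt x) else 0)"
    by (simp add: sum_distrib_left if_distrib[of "\<lambda>a. cnt _ * a"] mult_ac cong: if_cong)
  also have "\<dots> = (\<Sum>z\<in>S. \<Sum>x\<in>S. if p z then (w z)\<^sup>2 * (A x z * cnt x) else 0)" by (rule sum.swap)
  also have "\<dots> = (\<Sum>z\<in>S. if p z then (w z)\<^sup>2 * (\<Sum>x\<in>S. A x z * cnt x) else 0)"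
    by (intro sum.cong refl) (auto simp: sum_distrib_left)
  also have "\<dots> \<le> (\<Sum>z\<in>S. if p z then (w z)\<^sup>2 * \<Lambda> else 0)"
    using hyp unfolding cnt_def by (intro sum_mono) (auto intro: mult_left_mono)
  also have "\<dots> = \<Lambda> * (\<Sum>z\<in>S. (if p z then (w z)\<^sup>2 else 0))"
    by (simp add: sum_distrib_left if_distrib[of "\<lambda>a. \<Lambda> * a"] mult.commute cong: if_cong)
  finally show ?thesis .
qed

end




lemma binom_ineq:
  assumes s: "1 \<le> s" and r: "1 \<le> r"
  shows "real ((s - 1) choose (r - 1)) \<le> real r * real (s choose r) powr (1 - 1 / real r)"
proof -
  obtain s' r' where sr: "s = Suc s'" "r = Suc r'" using s r by (metis Suc_le_D One_nat_def)
  have key: "real s * real ((s - 1) choose (r - 1)) = real (s choose r) * real r"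
    using Suc_times_binomial_eq[of s' r'] sr by (simp only: of_nat_mult[symmetric]) simp
  show ?thesis
  proof (cases "s choose r = 0")
    case True
    have "real s * real ((s - 1) choose (r - 1)) = 0" using key True by simp
    hence z: "real ((s - 1) choose (r - 1)) = 0" using s by (simp only: mult_eq_0_iff) simp
    show ?thesis by (simp only: z) simp
  next
    case False
    hence rs: "r \<le> s" by (simp add: binomial_eq_0_iff not_less)
    define C where "C = real (s choose r)"
    have Cpos: "0 < C" using False C_def by simp
    have "C \<le> real s ^ r" unfolding C_def using binomial_le_pow[OF rs] by (simp only: of_nat_power[symmetric] of_nat_le_iff)
    hence "C powr (1 / real r) \<le> (real s ^ r) powr (1 / real r)" using Cpos by (intro powr_mono2) auto
    also have "(real s ^ r) powr (1 / real r) = real s"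
      using s r by (simp add: powr_realpow[symmetric] powr_powr)
    finally have Cr: "C powr (1 / real r) \<le> real s" .
    have Crpos: "0 < C powr (1 / real r)" using Cpos by simp
    have "real ((s - 1) choose (r - 1)) = real r * C / real s" using key s unfolding C_def by (simp add: field_simps)
    also have "\<dots> \<le> real r * C / C powr (1 / real r)"
      using Cr Crpos Cpos r s by (intro divide_left_mono mult_pos_pos) auto
    also have "\<dots> = real r * C powr (1 - 1 / real r)"
      using Cpos by (simp add: powr_diff)
    finally show ?thesis unfolding C_def .
  qed
qed

lemma nb_count:
  assumes sg: "simple_graph V E" and r: "r \<ge> 1" and x: "x \<in> aux_verts V r"
  shows "real (card {z \<in> aux_verts V r. aux_adj E x z \<and> v \<in> z})
       \<le> real r * real (degree (aux_verts V r) (aux_adj E) x) powr (1 - 1 / real r)"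
proof -
  have finV: "finite V" using sg by (simp add: simple_graph_def)
  have irr: "\<And>u. \<not> E u u" using sg by (simp add: simple_graph_def)
  define N where "N = {u\<in>V. \<forall>a\<in>x. E a u}"
  have finN: "finite N" using finV N_def by simp
  have e1: "{y \<in> aux_verts V r. aux_adj E x y} = {y. y \<subseteq> N \<and> card y = r}"
    unfolding aux_verts_def aux_adj_def N_def using irr by blast
  have deg: "degree (aux_verts V r) (aux_adj E) x = card N choose r"
    unfolding degree_def e1 using n_subsets[OF finN] .
  have e2: "{z \<in> aux_verts V r. aux_adj E x z \<and> v \<in> z} = {y. y \<subseteq> N \<and> card y = r \<and> v \<in> y}"
    using e1 by blast
  show ?thesis
  proof (cases "v \<in> N")
    case False
    hence em: "{y. y \<subseteq> N \<and> card y = r \<and> v \<in> y} = {}" by auto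
    show ?thesis unfolding e2 em by simp
  next
    case True
    have e3: "{y. y \<subseteq> N \<and> card y = r \<and> v \<in> y} = insert v ` {y. y \<subseteq> N - {v} \<and> card y = r - 1}"
    proof
      show "{y. y \<subseteq> N \<and> card y = r \<and> v \<in> y} \<subseteq> insert v ` {y. y \<subseteq> N - {v} \<and> card y = r - 1}"
      proof
        fix y assume y: "y \<in> {y. y \<subseteq> N \<and> card y = r \<and> v \<in> y}"
        have fy: "finite y" using y finN finite_subset by blast
        have "y = insert v (y - {v})" using y by auto
        moreover have "y - {v} \<in> {y. y \<subseteq> N - {v} \<and> card y = r - 1}" using y fy by auto
        ultimately show "y \<in> insert v ` {y. y \<subseteq> N - {v} \<and> card y = r - 1}" by blast
      qed
    next
      show "insert v ` {y. y \<subseteq> N - {v} \<and> card y = r - 1} \<subseteq> {y. y \<subseteq> N \<and> card y = r \<and> v \<in> y}"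
      proof
        fix y assume "y \<in> insert v ` {y. y \<subseteq> N - {v} \<and> card y = r - 1}"
        then obtain y' where y': "y = insert v y'" "y' \<subseteq> N - {v}" "card y' = r - 1" by blast
        have fy: "finite y'" using y' finN finite_subset by blast
        have "v \<notin> y'" using y' by auto
        hence "card y = r" using y' fy r by simp
        thus "y \<in> {y. y \<subseteq> N \<and> card y = r \<and> v \<in> y}" using y' True by auto
      qed
    qed
    have inj: "inj_on (insert v) {y. y \<subseteq> N - {v} \<and> card y = r - 1}"
      by (rule inj_onI) (metis Diff_insert_absorb Diff_subset_conv Un_insert_left insert_Diff1 mem_Collect_eq subsetD Diff_iff singletonI)
    have "card {y. y \<subseteq> N \<and> card y = r \<and> v \<in> y} = card (N - {v}) choose (r - 1)"
      unfolding e3 card_image[OF inj] using n_subsets[of "N - {v}"] finN by simp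
    also have "card (N - {v}) = card N - 1" using True finN by simp
    finally have c: "card {y. y \<subseteq> N \<and> card y = r \<and> v \<in> y} = (card N - 1) choose (r - 1)" .
    have "1 \<le> card N" using True finN by (metis One_nat_def Suc_leI card_gt_0_iff empty_iff)
    thus ?thesis unfolding e2 c deg using binom_ineq r by simp
  qed
qed

lemma powr_swap_ineq:
  fixes D1 D2 q :: real
  assumes "0 \<le> D1" "D1 \<le> D2" "0 \<le> q" "q \<le> 1"
  shows "D1 * D2 powr q \<le> D1 powr q * D2"
proof (cases "D1 = 0")
  case True thus ?thesis by simp
next
  case False
  hence p1: "0 < D1" using assms by simp
  hence p2: "0 < D2" using assms by simp
  have "D1 * D2 powr q = D1 powr q * D1 powr (1 - q) * D2 powr q"
    using p1 by (simp add: powr_add[symmetric])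
  also have "\<dots> \<le> D1 powr q * D2 powr (1 - q) * D2 powr q"
    using assms p1 by (intro mult_right_mono mult_left_mono powr_mono2) auto
  also have "\<dots> = D1 powr q * D2"
    using p2 by (simp add: mult.assoc powr_add[symmetric])
  finally show ?thesis .
qed

lemma sq_powr: "0 \<le> (x::real) \<Longrightarrow> (x powr a)\<^sup>2 = x powr (2 * a)"
  by (cases "x = 0") (auto simp: power2_eq_square powr_add[symmetric])

lemma root_bound:
  fixes W X H :: real and p :: nat
  assumes "0 < W" "0 \<le> X" "0 < H" "1 \<le> p" "W ^ p \<le> X * H ^ (p - 1)"
  shows "W \<le> X powr (1 / real p) * H powr (1 - 1 / real p)"
proof -
  have "W = (W ^ p) powr (1 / real p)"
    using assms by (simp add: powr_realpow[symmetric] powr_powr)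
  also have "\<dots> \<le> (X * H ^ (p - 1)) powr (1 / real p)"
    using assms by (intro powr_mono2) auto
  also have "\<dots> = X powr (1 / real p) * (H powr real (p - 1)) powr (1 / real p)"
  proof -
    have "H ^ (p - 1) = H powr real (p - 1)" using powr_realpow[OF \<open>0 < H\<close>, of "p - 1"] by (simp only:)
    thus ?thesis by (simp only: powr_mult)
  qed
  also have "(H powr real (p - 1)) powr (1 / real p) = H powr (1 - 1 / real p)"
    using assms by (simp add: powr_powr of_nat_diff field_simps)
  finally show ?thesis .
qed

lemma gm_bound:
  fixes B H W C c X n :: real
  assumes "0 \<le> B" "B \<le> H" "B \<le> C * W" "0 < H" "0 \<le> W" "0 \<le> X" "0 < n"
    and W: "W \<le> X powr (1 / n) * H powr (1 - 1 / n)"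
    and C: "C \<le> c\<^sup>2" "0 \<le> c" "0 \<le> C"
  shows "B \<le> c * X powr (1 / (2 * n)) * H powr (1 - 1 / (2 * n))"
proof -
  have "B\<^sup>2 = B * B" by (simp add: power2_eq_square)
  also have "\<dots> \<le> H * (C * W)" using assms by (intro mult_mono) auto
  also have "\<dots> \<le> H * (c\<^sup>2 * (X powr (1 / n) * H powr (1 - 1 / n)))"
    using assms by (intro mult_left_mono mult_mono) auto
  also have "\<dots> = c\<^sup>2 * X powr (1 / n) * (H * H powr (1 - 1 / n))" by (simp add: mult_ac)
  also have "H * H powr (1 - 1 / n) = H powr (2 * (1 - 1 / (2 * n)))"
  proof -
    have ex: "2 * (1 - 1 / (2 * n)) = 1 + (1 - 1 / n)" using assms by (simp add: field_simps)
    show ?thesis unfolding ex by (rule powr_mult_base) (use assms in simp)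
  qed
  also have "X powr (1 / n) = X powr (2 * (1 / (2 * n)))" using assms by simp
  also have "c\<^sup>2 * X powr (2 * (1 / (2 * n))) * H powr (2 * (1 - 1 / (2 * n)))
      = (c * X powr (1 / (2 * n)) * H powr (1 - 1 / (2 * n)))\<^sup>2"
    using assms by (simp add: power_mult_distrib sq_powr)
  finally have "B\<^sup>2 \<le> (c * X powr (1 / (2 * n)) * H powr (1 - 1 / (2 * n)))\<^sup>2" .
  thus ?thesis by (rule power2_le_imp_le) (use assms in simp)
qed




lemma c_sq:
  fixes k r :: nat and Dq :: real
  assumes "1 \<le> k" "1 \<le> r" "0 \<le> Dq"
  shows "4 * real k ^ 2 * real r ^ 2 * Dq \<le> (32 * real k powr (3/2) * real r powr ((real r + 1) / 2) * Dq powr (1/2))\<^sup>2"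
proof -
  have e: "(32 * real k powr (3/2) * real r powr ((real r + 1) / 2) * Dq powr (1/2))\<^sup>2
      = 1024 * real k powr 3 * real r powr (real r + 1) * Dq"
  proof -
    have a2: "(real k powr (3/2))\<^sup>2 = real k powr 3" by (simp add: sq_powr)
    have "(real r powr ((real r + 1) / 2))\<^sup>2 = real r powr (2 * ((real r + 1) / 2))" by (rule sq_powr) simp
    also have "2 * ((real r + 1) / 2) = real r + 1" by simp
    finally have b2: "(real r powr ((real r + 1) / 2))\<^sup>2 = real r powr (real r + 1)" .
    have "(Dq powr (1/2))\<^sup>2 = Dq powr (2 * (1/2))" by (rule sq_powr) (use assms in simp)
    also have "\<dots> = Dq" using assms by (simp add: powr_one)
    finally have d2: "(Dq powr (1/2))\<^sup>2 = Dq" .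
    show ?thesis by (simp only: power_mult_distrib a2 b2 d2) simp
  qed
  have k3: "real k powr 3 = real k ^ 3" using assms by simp
  have r1: "real r powr (real r + 1) = real r ^ (r + 1)"
    using assms powr_realpow[of "real r" "r + 1"] by (simp add: add.commute)
  have "real k ^ 2 \<le> real k ^ 3" using assms by (intro power_increasing) auto
  moreover have "real r ^ 2 \<le> real r ^ (r + 1)" using assms by (intro power_increasing) auto
  ultimately have "4 * real k ^ 2 * real r ^ 2 \<le> 1024 * real k ^ 3 * real r ^ (r + 1)"
    using assms by (intro mult_mono) auto
  hence "4 * real k ^ 2 * real r ^ 2 * Dq \<le> 1024 * real k ^ 3 * real r ^ (r + 1) * Dq"
    using assms by (intro mult_right_mono) auto
  thus ?thesis unfolding e k3 r1 .
qed

theorem lemma5p3: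
  fixes V :: "'a set" and E :: "'a \<Rightarrow> 'a \<Rightarrow> bool"
    and r k :: nat
    and VH X1 X2 :: "'a set set" and EH :: "'a set \<Rightarrow> 'a set \<Rightarrow> bool"
    and D1 D2 :: real and m :: nat
  assumes "r \<ge> 1" and "k \<ge> 2"
    and "simple_graph V E"
    and "subgraph VH EH (aux_verts V r) (aux_adj E)"
    and "bipartite_parts VH EH X1 X2"
    and "m = card VH"
    and "\<forall>x\<in>X1. real (degree (aux_verts V r) (aux_adj E) x) \<le> D1"
    and "\<forall>x\<in>X2. real (degree (aux_verts V r) (aux_adj E) x) \<le> D2"
    and "0 \<le> D1" and "D1 \<le> D2"
  defines "B \<equiv> card {f \<in> hom_cycles (2*k) VH EH.
                   \<exists>i<2*k. \<exists>j<2*k. i \<noteq> j \<and> f i \<inter> f j \<noteq> {}}"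
    and "H \<equiv> real (hom_C (2*k) VH EH)"
    and "c \<equiv> 32 * real k powr (3/2) * real r powr ((real r + 1) / 2)
              * (D1 powr (1 - 1 / real r) * D2) powr (1/2)"
  shows "real B \<le> c * real m powr (1 / (2 * real k)) * H powr (1 - 1 / (2 * real k))
       \<and> real B \<le> c * (real m * D2) powr (1 / (2 * real k - 2))
                   * H powr (1 - 1 / (2 * real k - 2))"
proof -
  note r1 = assms(1) and k2 = assms(2) and sg = assms(3) and sub = assms(4) and bip = assms(5)
    and mdef = assms(6) and deg1 = assms(7) and deg2 = assms(8) and D1nn = assms(9) and D12 = assms(10)
  define L where "L = 2 * k"
  define q where "q = 1 - 1 / real r"
  have q01: "0 \<le> q" "q \<le> 1" unfolding q_def using r1 by auto
  define \<Lambda> where "\<Lambda> = real r * D1 powr q * D2"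
  have D2nn: "0 \<le> D2" using D1nn D12 by simp
  have Lnn: "0 \<le> \<Lambda>" unfolding \<Lambda>_def using D2nn by simp
  have finV: "finite V" using sg by (simp add: simple_graph_def)
  have VHsub: "VH \<subseteq> aux_verts V r" using sub by (simp add: subgraph_def)
  have finAV: "finite (aux_verts V r)"
    by (rule finite_subset[of _ "Pow V"]) (auto simp: aux_verts_def finV)
  have finVH: "finite VH" using VHsub finAV finite_subset by blast
  have Rs: "\<And>x y. EH x y \<Longrightarrow> x \<in> VH \<and> y \<in> VH" using sub by (simp add: subgraph_def)
  have Rsym: "\<And>x y. EH x y \<Longrightarrow> EH y x" using sub by (simp add: subgraph_def)
  have Radj: "\<And>x y. EH x y \<Longrightarrow> aux_adj E x y" using sub by (simp add: subgraph_def)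
  have VHpart: "VH = X1 \<union> X2" "X1 \<inter> X2 = {}" using bip by (auto simp: bipartite_parts_def)
  have Rbip: "\<And>x y. EH x y \<Longrightarrow> (x \<in> X1 \<and> y \<in> X2) \<or> (x \<in> X2 \<and> y \<in> X1)"
    using bip by (simp add: bipartite_parts_def)
  define A where "A = adjm EH"
  interpret mset VH A unfolding A_def by (rule mset_adjm) (use finVH Rs Rsym in auto)
  have A01: "\<And>x y. A x y = 0 \<or> A x y = 1" unfolding A_def adjm_def by auto

  have degH: "card {y \<in> VH. EH x y} \<le> degree (aux_verts V r) (aux_adj E) x" for x
    unfolding degree_def using VHsub Radj finAV by (intro card_mono) auto
  have degD: "real (degree (aux_verts V r) (aux_adj E) x) \<le> (if x \<in> X1 then D1 else D2)" if "x \<in> VH" for x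
    using that deg1 deg2 VHpart by auto
  have degD2: "real (degree (aux_verts V r) (aux_adj E) x) \<le> D2" if "x \<in> VH" for x
    using degD[OF that] D12 by (auto split: if_splits)

  have cnt_bound: "(\<Sum>z'\<in>VH. if v \<in> z' then A x z' else 0) \<le> real r * (if x \<in> X1 then D1 else D2) powr q"
    if x: "x \<in> VH" for x v
  proof -
    have "(\<Sum>z'\<in>VH. if v \<in> z' then A x z' else 0) = (\<Sum>z'\<in>VH. if v \<in> z' \<and> EH x z' then 1 else 0)"
      unfolding A_def adjm_def by (intro sum.cong refl) auto
    also have "\<dots> = real (card {z'\<in>VH. v \<in> z' \<and> EH x z'})"
      using finVH by (simp add: sum.If_cases Int_def)
    also have "\<dots> \<le> real (card {z \<in> aux_verts V r. aux_adj E x z \<and> v \<in> z})"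
      using VHsub Radj finAV by (intro of_nat_mono card_mono) auto
    also have "\<dots> \<le> real r * real (degree (aux_verts V r) (aux_adj E) x) powr (1 - 1 / real r)"
      using nb_count[OF sg r1] x VHsub by auto
    also have "\<dots> \<le> real r * (if x \<in> X1 then D1 else D2) powr q"
      unfolding q_def[symmetric] using degD[OF x] q01 by (intro mult_left_mono powr_mono2) auto
    finally show ?thesis .
  qed

  have hyp: "(\<Sum>x\<in>VH. A x z * (\<Sum>z'\<in>VH. if v \<in> z' then A x z' else 0)) \<le> \<Lambda>" if z: "z \<in> VH" for z v
  proof -
    define M where "M = real r * (if z \<in> X1 then D2 else D1) powr q"
    have Mnn: "0 \<le> M" unfolding M_def by simp
    have "(\<Sum>x\<in>VH. A x z * (\<Sum>z'\<in>VH. if v \<in> z' then A x z' else 0)) \<le> (\<Sum>x\<in>VH. if EH x z then M else 0)"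
    proof (rule sum_mono)
      fix x assume x: "x \<in> VH"
      show "A x z * (\<Sum>z'\<in>VH. if v \<in> z' then A x z' else 0) \<le> (if EH x z then M else 0)"
      proof (cases "EH x z")
        case True
        have "(if x \<in> X1 then D1 else D2) = (if z \<in> X1 then D2 else D1)"
          using Rbip[OF True] VHpart by auto
        thus ?thesis using True cnt_bound[OF x, of v] unfolding A_def adjm_def M_def by simp
      qed (simp add: A_def adjm_def)
    qed
    also have "\<dots> = real (card {x\<in>VH. EH x z}) * M"
      using finVH by (simp add: sum.If_cases Int_def)
    also have "card {x\<in>VH. EH x z} = card {x\<in>VH. EH z x}" using Rsym by metis
    also have "real (card {x\<in>VH. EH z x}) * M \<le> (if z \<in> X1 then D1 else D2) * M"
      using degH[of z] degD[OF z] Mnn by (intro mult_right_mono) auto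
    also have "\<dots> \<le> \<Lambda>"
    proof (cases "z \<in> X1")
      case True
      have "D1 * D2 powr q \<le> D1 powr q * D2" by (rule powr_swap_ineq) (use D1nn D12 q01 in auto)
      hence "real r * (D1 * D2 powr q) \<le> real r * (D1 powr q * D2)" by (intro mult_left_mono) auto
      thus ?thesis using True unfolding M_def \<Lambda>_def by (simp add: mult_ac)
    next
      case False
      thus ?thesis unfolding M_def \<Lambda>_def by (simp add: mult_ac)
    qed
    finally show ?thesis .
  qed
  have opb: "(\<Sum>x\<in>VH. (\<Sum>z\<in>VH. A x z * (if v \<in> z then w z else 0))\<^sup>2) \<le> \<Lambda> * (\<Sum>z\<in>VH. (if v \<in> z then (w z)\<^sup>2 else 0))" for v w
    by (rule op_bound[OF A01]) (use hyp in auto)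

  define ps where "ps v z = (v \<in> z)" for v :: 'a and z :: "'a set"
  define W where "W = tr VH (mpow VH A (2 * (k - 1)))"
  have cardx: "card {v\<in>V. ps v x} = r" if "x \<in> VH" for x
  proof -
    have "x \<subseteq> V" "card x = r" using that VHsub by (auto simp: aux_verts_def)
    moreover have "{v\<in>V. ps v x} = x" using \<open>x \<subseteq> V\<close> unfolding ps_def by auto
    ultimately show ?thesis by simp
  qed
  have G0: "Gf ps V 0 (2 * (k - 2)) \<le> \<Lambda> * real r * W"
  proof -
    have "Gf ps V 0 (2 * (k - 2)) \<le> (\<Sum>v\<in>V. \<Lambda> * tr VH (mm VH (Kv (ps v)) (mpow VH A (2 * (k - 2)))))"
      unfolding Gf_def
    proof (rule sum_mono)
      fix v
      show "tr VH (mm VH (Kv (ps v)) (mm VH (mpow VH A 0) (mm VH (Kv (ps v)) (mpow VH A (2 * (k - 2))))))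
          \<le> \<Lambda> * tr VH (mm VH (Kv (ps v)) (mpow VH A (2 * (k - 2))))"
        by (rule K_quad) (use opb[of v] in \<open>simp add: ps_def\<close>)
    qed
    also have "\<dots> = \<Lambda> * (real r * tr VH (mpow VH A (2 * (k - 2) + 2)))"
      by (simp add: sum_distrib_left[symmetric] sum_K_pw[OF finV cardx])
    also have "2 * (k - 2) + 2 = 2 * (k - 1)" using k2 by simp
    finally show ?thesis unfolding W_def by simp
  qed

  define HC where "HC = hom_cycles (2*k) VH EH"
  have finHC: "finite HC" unfolding HC_def hom_cycles_def
    by (rule finite_subset[OF _ finite_PiE[of "{..<2*k}" "\<lambda>_. VH"]]) (use finVH in auto)
  define Bs where "Bs = {f \<in> HC. \<exists>i<2*k. \<exists>j<2*k. i \<noteq> j \<and> f i \<inter> f j \<noteq> {}}"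
  have Bdef: "B = card Bs" unfolding B_def Bs_def HC_def ..
  have Hdef: "H = tr VH (mpow VH A (2*k))"
    unfolding H_def A_def by (rule hom_C_trace) (use finVH Rs Rsym k2 in auto)
  have BH: "real B \<le> H"
    unfolding Bdef H_def hom_C_def HC_def[symmetric] Bs_def using finHC by (intro of_nat_mono card_mono) auto

  define P where "P = {(i,j). i < j \<and> j < 2*k \<and> 2 \<le> j - i \<and> j - i + 2 \<le> 2*k}"
  have Psub: "P \<subseteq> {..<2*k} \<times> {..<2*k}" unfolding P_def by auto
  have finP: "finite P" using Psub finite_subset by blast
  have cardP: "card P \<le> 2*k * (2*k)"
    using card_mono[OF _ Psub] by (simp add: card_cartesian_product)
  have Bs_sub: "Bs \<subseteq> (\<Union>ij\<in>P. \<Union>v\<in>V. {f \<in> HC. v \<in> f (fst ij) \<and> v \<in> f (snd ij)})"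
  proof
    fix f assume "f \<in> Bs"
    then obtain i j where f: "f \<in> HC" "i < 2*k" "j < 2*k" "i \<noteq> j" "f i \<inter> f j \<noteq> {}"
      unfolding Bs_def by blast
    define a where "a = min i j"
    define b where "b = max i j"
    have ab0: "a < b \<and> b < 2*k \<and> f a \<inter> f b \<noteq> {}"
    proof (cases "i < j")
      case True thus ?thesis using f unfolding a_def b_def by simp
    next
      case False
      hence "j < i" using f(4) by simp
      moreover have "f j \<inter> f i \<noteq> {}" using f(5) by (simp add: Int_commute)
      ultimately show ?thesis using f unfolding a_def b_def by simp
    qed
    hence ab: "a < b" "b < 2*k" "f a \<inter> f b \<noteq> {}" by auto
    then obtain w where w: "w \<in> f a" "w \<in> f b" by blast
    have fHC: "f \<in> PiE {..<2*k} (\<lambda>_. VH)" "\<And>t. t < 2*k \<Longrightarrow> EH (f t) (f (Suc t mod (2*k)))"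
      using f(1) unfolding HC_def hom_cycles_def by auto
    have "f a \<in> VH" using fHC ab by auto
    hence "w \<in> V" using w VHsub by (auto simp: aux_verts_def)
    have disj: "\<And>x y. EH x y \<Longrightarrow> x \<inter> y = {}" using Radj by (simp add: aux_adj_def)
    have d2: "2 \<le> b - a"
    proof (rule ccontr)
      assume "\<not> 2 \<le> b - a"
      hence "b = Suc a" using ab by simp
      hence "EH (f a) (f b)" using fHC(2)[of a] ab by simp
      thus False using disj ab by blast
    qed
    have d3: "b - a + 2 \<le> 2*k"
    proof (rule ccontr)
      assume "\<not> b - a + 2 \<le> 2*k"
      hence "a = 0" "b = 2*k - 1" using ab by auto
      hence "Suc b mod (2*k) = a" using k2 by simp
      hence "EH (f b) (f a)" using fHC(2)[of b] ab by simp
      thus False using disj ab by blast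
    qed
    have "(a, b) \<in> P" unfolding P_def using ab d2 d3 by simp
    thus "f \<in> (\<Union>ij\<in>P. \<Union>v\<in>V. {f \<in> HC. v \<in> f (fst ij) \<and> v \<in> f (snd ij)})"
      using \<open>w \<in> V\<close> w f(1) by force
  qed
  have "B \<le> card (\<Union>ij\<in>P. \<Union>v\<in>V. {f \<in> HC. v \<in> f (fst ij) \<and> v \<in> f (snd ij)})"
    unfolding Bdef by (rule card_mono[OF finite_subset[OF _ finHC] Bs_sub]) auto
  also have "\<dots> \<le> (\<Sum>ij\<in>P. card (\<Union>v\<in>V. {f \<in> HC. v \<in> f (fst ij) \<and> v \<in> f (snd ij)}))"
    by (rule card_UN_le[OF finP])
  also have "\<dots> \<le> (\<Sum>ij\<in>P. \<Sum>v\<in>V. card {f \<in> HC. v \<in> f (fst ij) \<and> v \<in> f (snd ij)})"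
    by (intro sum_mono card_UN_le finV)
  finally have B0: "B \<le> (\<Sum>ij\<in>P. \<Sum>v\<in>V. card {f \<in> HC. v \<in> f (fst ij) \<and> v \<in> f (snd ij)})" .
  have "real B \<le> (\<Sum>ij\<in>P. \<Sum>v\<in>V. real (card {f \<in> HC. v \<in> f (fst ij) \<and> v \<in> f (snd ij)}))"
    using of_nat_mono[OF B0] by simp
  also have "\<dots> \<le> (\<Sum>ij\<in>P. \<Lambda> * real r * W)"
  proof (rule sum_mono)
    fix ij assume ij: "ij \<in> P"
    obtain i j where ijd: "ij = (i,j)" by fastforce
    have c: "i < j" "j < 2*k" "2 \<le> j - i" "j - i + 2 \<le> 2*k" using ij ijd unfolding P_def by auto
    have "(\<Sum>v\<in>V. real (card {f \<in> HC. v \<in> f i \<and> v \<in> f j})) = Gf ps V (j - i - 2) (2*k - (j - i) - 2)"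
      unfolding Gf_def HC_def
    proof (intro sum.cong refl)
      fix v
      have "real (card {f \<in> hom_cycles (2 * k) VH EH. ps v (f i) \<and> ps v (f j)}) =
         tr VH (mm VH (Kv (ps v)) (mm VH (mpow VH A (j - i - 2)) (mm VH (Kv (ps v)) (mpow VH A (2*k - (j - i) - 2)))))"
        unfolding A_def by (rule hc_pair_trace[OF finVH Rs Rsym c])
      thus "real (card {f \<in> hom_cycles (2 * k) VH EH. v \<in> f i \<and> v \<in> f j}) =
         tr VH (mm VH (Kv (ps v)) (mm VH (mpow VH A (j - i - 2)) (mm VH (Kv (ps v)) (mpow VH A (2*k - (j - i) - 2)))))"
        unfolding ps_def .
    qed
    also have "2*k - (j - i) - 2 = 2 * (k - 2) - (j - i - 2)" using c by simp
    also have "Gf ps V (j - i - 2) (2 * (k - 2) - (j - i - 2)) \<le> Gf ps V 0 (2 * (k - 2))"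
      by (rule Gf_bound) (use c in simp)
    also have "\<dots> \<le> \<Lambda> * real r * W" by (rule G0)
    finally show "(\<Sum>v\<in>V. real (card {f \<in> HC. v \<in> f (fst ij) \<and> v \<in> f (snd ij)})) \<le> \<Lambda> * real r * W"
      using ijd by simp
  qed
  also have "\<dots> = real (card P) * (\<Lambda> * real r * W)" by simp
  also have "\<dots> \<le> real (2*k*(2*k)) * (\<Lambda> * real r * W)"
  proof -
    have "real (card P) \<le> real (2*k*(2*k))" using cardP by (simp only: of_nat_le_iff)
    thus ?thesis using Lnn tr_pw_nn[of "k - 1"] unfolding W_def by (intro mult_right_mono) auto
  qed
  finally have BW: "real B \<le> (4 * real k ^ 2 * real r ^ 2 * (D1 powr q * D2)) * W"
    unfolding \<Lambda>_def by (simp add: power2_eq_square mult_ac)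

  define a where "a j = tr VH (mpow VH A (2*j))" for j
  have ann: "\<And>j. 0 \<le> a j" unfolding a_def by (rule tr_pw_nn)
  have alc: "\<And>j. 1 \<le> j \<Longrightarrow> (a j)\<^sup>2 \<le> a (j - 1) * a (j + 1)" unfolding a_def by (rule tr_pw_lc)
  have a0: "a 0 = real m" unfolding a_def mdef using tr_idm by simp
  have a1: "a 1 \<le> real m * D2"
  proof -
    have p2: "mpow VH A (2*1) = mm VH A A" using mm_idm_right[OF finS suppA] by (simp add: numeral_2_eq_2)
    have "a 1 = (\<Sum>x\<in>VH. \<Sum>z\<in>VH. A x z * A z x)"
      unfolding a_def tr_def p2 by (simp add: mm_def)
    also have "\<dots> = (\<Sum>x\<in>VH. real (card {z\<in>VH. EH x z}))"
    proof (intro sum.cong refl)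
      fix x
      have "(\<Sum>z\<in>VH. A x z * A z x) = (\<Sum>z\<in>VH. if EH x z then 1 else 0)"
        unfolding A_def adjm_def using Rsym by (intro sum.cong refl) auto
      thus "(\<Sum>z\<in>VH. A x z * A z x) = real (card {z\<in>VH. EH x z})"
        using finVH by (simp add: sum.If_cases Int_def)
    qed
    also have "\<dots> \<le> (\<Sum>x\<in>VH. D2)"
      by (rule sum_mono) (use degH degD2 in \<open>meson order_trans of_nat_le_iff\<close>)
    also have "\<dots> = real m * D2" using mdef by simp
    finally show ?thesis .
  qed
  have ak: "a k = H" unfolding a_def Hdef ..
  have akm: "a (k - 1) = W" unfolding a_def W_def ..

  have cnn: "0 \<le> c" unfolding c_def by simp
  have Dq: "0 \<le> D1 powr q * D2" using D2nn by simp
  have csq: "4 * real k ^ 2 * real r ^ 2 * (D1 powr q * D2) \<le> c\<^sup>2"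
    unfolding c_def q_def[symmetric] by (rule c_sq) (use k2 r1 Dq in auto)
  have Cnn: "0 \<le> 4 * real k ^ 2 * real r ^ 2 * (D1 powr q * D2)" using Dq by simp
  show ?thesis
  proof (cases "H = 0")
    case True
    hence "real B = 0" using BH by simp
    thus ?thesis using cnn by simp
  next
    case False
    hence Hpos: "0 < H" unfolding H_def by simp
    have apos: "\<And>j. j \<le> k \<Longrightarrow> 0 < a j" by (rule seq_pos[OF ann alc]) (use Hpos ak in auto)
    have Wpos: "0 < W" using apos[of "k-1"] akm by simp
    have i1: "W ^ k \<le> real m * H ^ (k - 1)"
      using seq_interp[where a=a and k=k and i=0, OF ann alc apos] k2 a0 ak akm by simp
    have i2: "W ^ (k - 1) \<le> a 1 * H ^ (k - 2)"
      using seq_interp[where a=a and k=k and i=1, OF ann alc apos] k2 ak akm by (simp add: numeral_2_eq_2)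
    have W1: "W \<le> real m powr (1 / real k) * H powr (1 - 1 / real k)"
      by (rule root_bound[OF Wpos _ Hpos _ i1]) (use k2 in auto)
    have W2': "W \<le> a 1 powr (1 / real (k - 1)) * H powr (1 - 1 / real (k - 1))"
      by (rule root_bound[OF Wpos _ Hpos _]) (use k2 ann i2 in \<open>auto simp: numeral_2_eq_2\<close>)
    have W2: "W \<le> (real m * D2) powr (1 / (real k - 1)) * H powr (1 - 1 / (real k - 1))"
    proof -
      have "a 1 powr (1 / real (k - 1)) \<le> (real m * D2) powr (1 / real (k - 1))"
        using a1 ann k2 by (intro powr_mono2) auto
      thus ?thesis using W2' k2 by (simp add: of_nat_diff) (meson mult_right_mono order_trans powr_ge_zero)
    qed
    have R1: "real B \<le> c * real m powr (1 / (2 * real k)) * H powr (1 - 1 / (2 * real k))"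
      by (rule gm_bound[OF _ BH BW Hpos _ _ _ W1 csq cnn Cnn]) (use Wpos k2 in auto)
    have R2: "real B \<le> c * (real m * D2) powr (1 / (2 * (real k - 1))) * H powr (1 - 1 / (2 * (real k - 1)))"
      by (rule gm_bound[OF _ BH BW Hpos _ _ _ W2 csq cnn Cnn]) (use Wpos k2 D2nn in auto)
    have e: "2 * (real k - 1) = 2 * real k - 2" by simp
    show ?thesis using R1 R2 unfolding e by simp
  qed
qed



end
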